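(* Let $G$ be a finite transitive permutation group on a finite set $\Omega$ such that ${\bf O}_2(G)=1$ and such that the point stabiliser $G_\omega$ (for $\omega\in\Omega$) is a $2$-group. Then $\mathrm{mindeg}_\Omega(G)\ge 2|\Omega|/3$.
   Context: ${\bf O}_2(G)$ denotes the largest normal $2$-subgroup of $G$. For $g\in G$, $\mathrm{Fix}_\Omega(g)=\{\omega\in\Omega\mid \omega^g=\omega\}$ and $\mathrm{supp}_\Omega(g)=\Omega\setminus\mathrm{Fix}_\Omega(g)$. The minimal degree is $\mathrm{mindeg}_\Omega(G)=\min_{g\in G\setminus\{1\}}|\mathrm{supp}_\Omega(g)|$. *)

theory Defs
  imports "HOL-Algebra.Algebra"
begin

definition perm_grp :: "'a set \<Rightarrow> ('a \<Rightarrow> 'a) set \<Rightarrow> ('a \<Rightarrow> 'a) monoid" where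
  "perm_grp \<Omega> H = (BijGroup \<Omega>)\<lparr>carrier := H\<rparr>"

definition is_perm_group :: "'a set \<Rightarrow> ('a \<Rightarrow> 'a) set \<Rightarrow> bool" where
  "is_perm_group \<Omega> H \<longleftrightarrow> subgroup H (BijGroup \<Omega>)"

definition transitive_on :: "'a set \<Rightarrow> ('a \<Rightarrow> 'a) set \<Rightarrow> bool" where
  "transitive_on \<Omega> H \<longleftrightarrow> \<Omega> \<noteq> {} \<and> (\<forall>\<alpha>\<in>\<Omega>. \<forall>\<beta>\<in>\<Omega>. \<exists>g\<in>H. g \<alpha> = \<beta>)"

definition p_subgroup :: "('g, 'b) monoid_scheme \<Rightarrow> nat \<Rightarrow> 'g set \<Rightarrow> bool" where
  "p_subgroup G p N \<longleftrightarrow> subgroup N G \<and> finite N \<and> (\<exists>k. card N = p ^ k)"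

text \<open>O_2(G): the largest normal 2-subgroup, i.e. the subgroup generated by all normal
  2-subgroups.\<close>
definition O2 :: "('g, 'b) monoid_scheme \<Rightarrow> 'g set" where
  "O2 G = generate G (\<Union>{N. N \<lhd> G \<and> p_subgroup G 2 N})"

definition stabiliser :: "('a \<Rightarrow> 'a) set \<Rightarrow> 'a \<Rightarrow> ('a \<Rightarrow> 'a) set" where
  "stabiliser H \<omega> = {g \<in> H. g \<omega> = \<omega>}"

definition supp :: "'a set \<Rightarrow> ('a \<Rightarrow> 'a) \<Rightarrow> 'a set" where
  "supp \<Omega> g = {x \<in> \<Omega>. g x \<noteq> x}"

end

theory Submission imports Defs begin

definition pg :: "'a set \<Rightarrow> bool" where "pg S \<longleftrightarrow> (\<exists>k. card S = 2 ^ k)"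

lemma dvd_pow2: "(n::nat) dvd 2 ^ k \<Longrightarrow> \<exists>j. n = 2 ^ j"
  using divides_primepow_nat[of 2 n k] by auto

locale fgroup = group G for G :: "('a, 'b) monoid_scheme" (structure) +
  assumes fin: "finite (carrier G)"
begin

lemma canc1: "x \<in> carrier G \<Longrightarrow> y \<in> carrier G \<Longrightarrow> x \<otimes> (inv x \<otimes> y) = y"
  by (simp add: m_assoc[symmetric])
lemma canc2: "x \<in> carrier G \<Longrightarrow> y \<in> carrier G \<Longrightarrow> inv x \<otimes> (x \<otimes> y) = y"
  by (simp add: m_assoc[symmetric])

lemma fin_sub: "A \<subseteq> carrier G \<Longrightarrow> finite A"
  using fin finite_subset by blast

lemma sub_card_dvd:
  assumes "subgroup A G" "subgroup B G" "A \<subseteq> B"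
  shows "card A dvd card B"
proof -
  have g: "group (G\<lparr>carrier := B\<rparr>)" using assms(2) subgroup_imp_group by blast
  have s: "subgroup A (G\<lparr>carrier := B\<rparr>)" using subgroup_incl assms by blast
  have "card (rcosets\<^bsub>G\<lparr>carrier := B\<rparr>\<^esub> A) * card A = order (G\<lparr>carrier := B\<rparr>)"
    using group.lagrange[OF g s] .
  moreover have "order (G\<lparr>carrier := B\<rparr>) = card B" by (simp add: order_def)
  ultimately show ?thesis using dvd_triv_right[of "card A" "card (rcosets\<^bsub>G\<lparr>carrier := B\<rparr>\<^esub> A)"] by (simp add: mult.commute)
qed

lemma pg_sub:
  assumes "subgroup A G" "subgroup B G" "A \<subseteq> B" "pg B"
  shows "pg A"
proof -
  obtain k where "card B = 2 ^ k" using assms(4) pg_def by blast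
  then have "card A dvd 2 ^ k" using sub_card_dvd[OF assms(1-3)] by simp
  then show ?thesis using dvd_pow2 pg_def by blast
qed

lemma gen_sub: "S \<subseteq> carrier G \<Longrightarrow> subgroup (generate G S) G"
  by (rule generate_is_subgroup)

lemma gen_incl: "S \<subseteq> generate G S"
  by (rule subsetI, erule generate.incl)

lemma gen_min: "S \<subseteq> H \<Longrightarrow> subgroup H G \<Longrightarrow> generate G S \<subseteq> H"
  by (rule generate_subgroup_incl)

lemma gen_mono: "S \<subseteq> T \<Longrightarrow> T \<subseteq> carrier G \<Longrightarrow> generate G S \<subseteq> generate G T"
  by (rule mono_generate)

lemma gen_self: "subgroup H G \<Longrightarrow> generate G H = H"
  by (rule equalityI, rule gen_min[OF order_refl], assumption, rule gen_incl)

definition setprod :: "'a set \<Rightarrow> 'a set \<Rightarrow> 'a set" where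
  "setprod A B = {x. \<exists>a\<in>A. \<exists>b\<in>B. x = a \<otimes> b}"

lemma setprodI: "a \<in> A \<Longrightarrow> b \<in> B \<Longrightarrow> a \<otimes> b \<in> setprod A B"
  unfolding setprod_def by auto

lemma setprodE: "x \<in> setprod A B \<Longrightarrow> (\<And>a b. a \<in> A \<Longrightarrow> b \<in> B \<Longrightarrow> x = a \<otimes> b \<Longrightarrow> P) \<Longrightarrow> P"
  unfolding setprod_def by auto

lemma setprod_subgroup:
  assumes A: "subgroup A G" and B: "subgroup B G"
    and nz: "\<And>a b. a\<in>A \<Longrightarrow> b\<in>B \<Longrightarrow> a \<otimes> b \<otimes> inv a \<in> B"
  shows "subgroup (setprod A B) G"
proof (rule subgroupI)
  have Ac: "A \<subseteq> carrier G" using A subgroup.subset by blast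
  have Bc: "B \<subseteq> carrier G" using B subgroup.subset by blast
  show "setprod A B \<subseteq> carrier G"
  proof
    fix x assume "x \<in> setprod A B"
    then show "x \<in> carrier G"
      by (rule setprodE) (use Ac Bc in auto)
  qed
  have "\<one> \<otimes> \<one> \<in> setprod A B"
    by (rule setprodI) (use A B subgroup.one_closed in auto)
  then show "setprod A B \<noteq> {}" by auto
  show "inv x \<in> setprod A B" if "x \<in> setprod A B" for x
  proof -
    obtain a b where ab: "a \<in> A" "b \<in> B" "x = a \<otimes> b" using \<open>x \<in> setprod A B\<close> by (rule setprodE)
    have ac: "a \<in> carrier G" "b \<in> carrier G" using ab Ac Bc by auto
    have "inv x = inv b \<otimes> inv a" using ab ac by (simp add: inv_mult_group)
    also have "\<dots> = inv a \<otimes> (a \<otimes> inv b \<otimes> inv a)" using ac by (simp add: m_assoc[symmetric])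
    finally have e: "inv x = inv a \<otimes> (a \<otimes> inv b \<otimes> inv a)" .
    have "inv a \<in> A" using A ab(1) by (rule subgroup.m_inv_closed)
    moreover have "a \<otimes> inv b \<otimes> inv a \<in> B" 
      using nz[OF ab(1) subgroup.m_inv_closed[OF B ab(2)]] .
    ultimately show ?thesis unfolding e by (rule setprodI)
  qed
  show "x \<otimes> y \<in> setprod A B" if "x \<in> setprod A B" "y \<in> setprod A B" for x y
  proof -
    obtain a b where ab: "a \<in> A" "b \<in> B" "x = a \<otimes> b" using \<open>x \<in> setprod A B\<close> by (rule setprodE)
    obtain a' b' where ab': "a' \<in> A" "b' \<in> B" "y = a' \<otimes> b'" using \<open>y \<in> setprod A B\<close> by (rule setprodE)
    have ac: "a \<in> carrier G" "b \<in> carrier G" "a' \<in> carrier G" "b' \<in> carrier G" using ab ab' Ac Bc by auto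
    have e: "x \<otimes> y = (a \<otimes> a') \<otimes> ((inv a' \<otimes> b \<otimes> inv (inv a')) \<otimes> b')"
      using ac ab ab' by (simp add: m_assoc canc1)
    have i: "inv a' \<in> A" using A ab'(1) by (rule subgroup.m_inv_closed)
    have "a \<otimes> a' \<in> A" using A ab(1) ab'(1) by (rule subgroup.m_closed)
    moreover have "(inv a' \<otimes> b \<otimes> inv (inv a')) \<otimes> b' \<in> B"
      using B nz[OF i ab(2)] ab'(2) by (rule subgroup.m_closed)
    ultimately show ?thesis unfolding e by (rule setprodI)
  qed
qed

lemma setprod_gen:
  assumes A: "subgroup A G" and B: "subgroup B G"
    and nz: "\<And>a b. a\<in>A \<Longrightarrow> b\<in>B \<Longrightarrow> a \<otimes> b \<otimes> inv a \<in> B"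
  shows "generate G (A \<union> B) = setprod A B"
proof (rule equalityI)
  have Ac: "A \<subseteq> carrier G" using A subgroup.subset by blast
  have Bc: "B \<subseteq> carrier G" using B subgroup.subset by blast
  have "A \<union> B \<subseteq> setprod A B"
  proof
    fix x assume "x \<in> A \<union> B"
    then show "x \<in> setprod A B"
    proof
      assume xA: "x \<in> A"
      then have "x = x \<otimes> \<one>" using Ac by auto
      moreover have "x \<otimes> \<one> \<in> setprod A B" using xA subgroup.one_closed[OF B] by (rule setprodI)
      ultimately show ?thesis by simp
    next
      assume xB: "x \<in> B"
      then have "x = \<one> \<otimes> x" using Bc by auto
      moreover have "\<one> \<otimes> x \<in> setprod A B" using subgroup.one_closed[OF A] xB by (rule setprodI)
      ultimately show ?thesis by simp
    qed
  qed
  then show "generate G (A \<union> B) \<subseteq> setprod A B"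
    using setprod_subgroup[OF A B nz] by (rule gen_min)
  show "setprod A B \<subseteq> generate G (A \<union> B)"
  proof
    fix x assume "x \<in> setprod A B"
    then obtain a b where ab: "a \<in> A" "b \<in> B" "x = a \<otimes> b" by (rule setprodE)
    have "a \<in> generate G (A \<union> B)" using ab(1) by (intro generate.incl) simp
    moreover have "b \<in> generate G (A \<union> B)" using ab(2) by (intro generate.incl) simp
    ultimately show "x \<in> generate G (A \<union> B)" unfolding ab(3) by (rule generate.eng)
  qed
qed

lemma setprod_card:
  assumes A: "subgroup A G" and B: "subgroup B G"
  shows "card A * card B = card (setprod A B) * card (A \<inter> B)"
proof -
  have Ac: "A \<subseteq> carrier G" using A subgroup.subset by blast
  have Bc: "B \<subseteq> carrier G" using B subgroup.subset by blast
  have ABc: "setprod A B \<subseteq> carrier G"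
  proof
    fix x assume "x \<in> setprod A B"
    then show "x \<in> carrier G"
      by (rule setprodE) (use Ac Bc in auto)
  qed
  define fib where "fib x = {p \<in> A \<times> B. fst p \<otimes> snd p = x}" for x
  have finA: "finite A" "finite B" using Ac Bc fin_sub by auto
  have U: "A \<times> B = (\<Union>x\<in>setprod A B. fib x)"
  proof (rule equalityI)
    show "A \<times> B \<subseteq> (\<Union>x\<in>setprod A B. fib x)"
    proof
      fix p assume p: "p \<in> A \<times> B"
      then have "fst p \<otimes> snd p \<in> setprod A B" by (intro setprodI) auto
      moreover have "p \<in> fib (fst p \<otimes> snd p)" using p unfolding fib_def by simp
      ultimately show "p \<in> (\<Union>x\<in>setprod A B. fib x)" by (rule UN_I)
    qed
    show "(\<Union>x\<in>setprod A B. fib x) \<subseteq> A \<times> B" unfolding fib_def by auto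
  qed
  have "card (A \<times> B) = (\<Sum>x\<in>setprod A B. card (fib x))"
    unfolding U
  proof (rule card_UN_disjoint)
    show "finite (setprod A B)" using ABc by (rule fin_sub)
    show "\<forall>i\<in>setprod A B. finite (fib i)"
    proof
      fix i show "finite (fib i)" unfolding fib_def using finA by simp
    qed
    show "\<forall>i\<in>setprod A B. \<forall>j\<in>setprod A B. i \<noteq> j \<longrightarrow> fib i \<inter> fib j = {}"
      unfolding fib_def by auto
  qed
  moreover have "card (fib x) = card (A \<inter> B)" if "x \<in> setprod A B" for x
  proof -
    obtain a0 b0 where ab: "a0 \<in> A" "b0 \<in> B" "x = a0 \<otimes> b0" using \<open>x \<in> setprod A B\<close> by (rule setprodE)
    have c0: "a0 \<in> carrier G" "b0 \<in> carrier G" using ab Ac Bc by auto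
    have "fib x = (\<lambda>k. (a0 \<otimes> k, inv k \<otimes> b0)) ` (A \<inter> B)"
    proof (rule equalityI)
      show "fib x \<subseteq> (\<lambda>k. (a0 \<otimes> k, inv k \<otimes> b0)) ` (A \<inter> B)"
      proof
        fix p assume "p \<in> fib x"
        then obtain a b where p: "p = (a, b)" "a \<in> A" "b \<in> B" "a \<otimes> b = a0 \<otimes> b0"
          unfolding fib_def ab by auto
        have c: "a \<in> carrier G" "b \<in> carrier G" using p Ac Bc by auto
        define k where "k = inv a0 \<otimes> a"
        have kA: "k \<in> A" unfolding k_def
          using A subgroup.m_inv_closed[OF A ab(1)] p(2) by (rule subgroup.m_closed)
        have "inv a0 \<otimes> (a \<otimes> b) \<otimes> inv b = inv a0 \<otimes> (a0 \<otimes> b0) \<otimes> inv b" using p by simp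
        then have kk: "k = b0 \<otimes> inv b" unfolding k_def using c c0 by (simp add: m_assoc canc2)
        have kB: "k \<in> B" unfolding kk
          using B ab(2) subgroup.m_inv_closed[OF B p(3)] by (rule subgroup.m_closed)
        have kc: "k \<in> carrier G" using kA Ac by auto
        have e1: "a = a0 \<otimes> k" unfolding k_def using c c0 by (simp add: canc1)
        have "inv k \<otimes> b0 = inv (b0 \<otimes> inv b) \<otimes> b0" using kk by simp
        also have "\<dots> = b" using c c0 by (simp add: inv_mult_group m_assoc)
        finally have e2: "b = inv k \<otimes> b0" by simp
        show "p \<in> (\<lambda>k. (a0 \<otimes> k, inv k \<otimes> b0)) ` (A \<inter> B)"
          unfolding p(1) e1 e2 using kA kB by (intro imageI) simp
      qed
      show "(\<lambda>k. (a0 \<otimes> k, inv k \<otimes> b0)) ` (A \<inter> B) \<subseteq> fib x"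
      proof
        fix p assume "p \<in> (\<lambda>k. (a0 \<otimes> k, inv k \<otimes> b0)) ` (A \<inter> B)"
        then obtain k where k: "k \<in> A" "k \<in> B" "p = (a0 \<otimes> k, inv k \<otimes> b0)" by auto
        have kc: "k \<in> carrier G" using k Ac by auto
        have "a0 \<otimes> k \<in> A" using A ab(1) k(1) by (rule subgroup.m_closed)
        moreover have "inv k \<otimes> b0 \<in> B" using B subgroup.m_inv_closed[OF B k(2)] ab(2) by (rule subgroup.m_closed)
        moreover have "(a0 \<otimes> k) \<otimes> (inv k \<otimes> b0) = x" using ab kc c0
          by (simp add: m_assoc canc1)
        ultimately show "p \<in> fib x" unfolding fib_def k(3) by simp
      qed
    qed
    moreover have "inj_on (\<lambda>k. (a0 \<otimes> k, inv k \<otimes> b0)) (A \<inter> B)"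
    proof (rule inj_onI)
      fix k k' assume "k \<in> A \<inter> B" "k' \<in> A \<inter> B" "(a0 \<otimes> k, inv k \<otimes> b0) = (a0 \<otimes> k', inv k' \<otimes> b0)"
      then have "a0 \<otimes> k = a0 \<otimes> k'" "k \<in> carrier G" "k' \<in> carrier G" using Ac by auto
      then show "k = k'" using c0 by simp
    qed
    ultimately show ?thesis by (simp add: card_image)
  qed
  ultimately have "card (A \<times> B) = card (setprod A B) * card (A \<inter> B)" by simp
  then show ?thesis by (simp add: card_cartesian_product)
qed

lemma product_pg:
  assumes A: "subgroup A G" and B: "subgroup B G"
    and nz: "\<And>a b. a\<in>A \<Longrightarrow> b\<in>B \<Longrightarrow> a \<otimes> b \<otimes> inv a \<in> B"
    and pA: "pg A" and pB: "pg B"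
  shows "pg (generate G (A \<union> B))"
proof -
  obtain i where i: "card A = 2 ^ i" using pA unfolding pg_def by blast
  obtain j where j: "card B = 2 ^ j" using pB unfolding pg_def by blast
  have "card (setprod A B) dvd 2 ^ (i + j)" using setprod_card[OF A B] i j 
    by (metis dvd_triv_left power_add)
  then have "\<exists>k. card (setprod A B) = 2 ^ k" by (rule dvd_pow2)
  then show ?thesis using setprod_gen[OF A B nz] unfolding pg_def by simp
qed

end

context fgroup begin

lemma conj_inv_closed:
  assumes M: "subgroup M G" and g: "g \<in> carrier G"
    and cl: "\<And>m. m \<in> M \<Longrightarrow> g \<otimes> m \<otimes> inv g \<in> M"
    and m: "m \<in> M"
  shows "inv g \<otimes> m \<otimes> g \<in> M"
proof -
  have Mc: "M \<subseteq> carrier G" using M subgroup.subset by blast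
  let ?f = "\<lambda>x. g \<otimes> x \<otimes> inv g"
  have inj: "inj_on ?f M"
  proof (rule inj_onI)
    fix x y assume "x \<in> M" "y \<in> M" "?f x = ?f y"
    then show "x = y" using Mc g conjugation_is_inj[of g x y] by auto
  qed
  have sub: "?f ` M \<subseteq> M" using cl by auto
  have "card (?f ` M) = card M" using inj by (rule card_image)
  then have "?f ` M = M" using sub fin_sub[OF Mc] by (simp add: card_subset_eq)
  then have "m \<in> ?f ` M" using m by simp
  then obtain x where x: "x \<in> M" "m = ?f x" by (rule imageE) simp
  have xc: "x \<in> carrier G" using x Mc by auto
  have "inv g \<otimes> m \<otimes> g = x" unfolding x(2) using g xc by (simp add: m_assoc canc2)
  then show ?thesis using x by simp
qed

lemma coset_conj:
  assumes M: "subgroup M G" and h: "h \<in> M" and g: "g \<in> carrier G"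
  shows "h <# (M #> g) #> inv h = M #> (g \<otimes> inv h)"
proof -
  have Mc: "M \<subseteq> carrier G" using M subgroup.subset by blast
  have hc: "h \<in> carrier G" using h Mc by auto
  show ?thesis
  proof (rule equalityI; rule subsetI)
    fix x assume "x \<in> h <# (M #> g) #> inv h"
    then obtain m where m: "m \<in> M" "x = h \<otimes> (m \<otimes> g) \<otimes> inv h" unfolding l_coset_def r_coset_def by auto
    have mc: "m \<in> carrier G" using m Mc by auto
    have hm: "h \<otimes> m \<in> M" using M h m(1) by (rule subgroup.m_closed)
    have "x = (h \<otimes> m) \<otimes> (g \<otimes> inv h)" using m(2) hc mc g by (simp add: m_assoc)
    then show "x \<in> M #> (g \<otimes> inv h)" unfolding r_coset_def using hm by auto
  next
    fix x assume "x \<in> M #> (g \<otimes> inv h)"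
    then obtain m where m: "m \<in> M" "x = m \<otimes> (g \<otimes> inv h)" unfolding r_coset_def by auto
    have mc: "m \<in> carrier G" using m Mc by auto
    have hm: "inv h \<otimes> m \<in> M" using M subgroup.m_inv_closed[OF M h] m(1) by (rule subgroup.m_closed)
    have "x = h \<otimes> ((inv h \<otimes> m) \<otimes> g) \<otimes> inv h" using m(2) hc mc g by (simp add: m_assoc canc1)
    then show "x \<in> h <# (M #> g) #> inv h" unfolding r_coset_def l_coset_def using hm by auto
  qed
qed

lemma normalizer_growth:
  assumes P: "subgroup P G" and pP: "pg P" and M: "subgroup M G" and MP: "M \<subseteq> P" and ne: "M \<noteq> P"
  shows "\<exists>g\<in>P. g \<notin> M \<and> (\<forall>m\<in>M. g \<otimes> m \<otimes> inv g \<in> M)"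
proof -
  have Mc: "M \<subseteq> carrier G" using M subgroup.subset by blast
  have Pc: "P \<subseteq> carrier G" using P subgroup.subset by blast
  define U where "U = {H. H \<subseteq> carrier G}"
  define \<phi> where "\<phi> = (\<lambda>g. \<lambda>H \<in> {H. H \<subseteq> carrier G}. g <# H #> (inv g))"
  define Mg where "Mg = G\<lparr>carrier := M\<rparr>"
  have act: "group_action Mg U \<phi>"
    unfolding Mg_def U_def \<phi>_def
    using group_action.induced_action[OF action_by_conjugation_on_power_set M] .
  define E where "E = {M #> g |g. g \<in> P}"
  have EU: "E \<subseteq> U" unfolding E_def U_def using r_coset_subset_G[OF Mc] Pc by auto
  have phiE: "\<phi> h (M #> g) = M #> (g \<otimes> inv h)" if "h \<in> M" "g \<in> P" for h g
  proof -
    have "M #> g \<in> {H. H \<subseteq> carrier G}" using r_coset_subset_G[OF Mc] Pc that by auto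
    then have "\<phi> h (M #> g) = h <# (M #> g) #> inv h" unfolding \<phi>_def by simp
    also have "\<dots> = M #> (g \<otimes> inv h)" using coset_conj[OF M that(1), of g] that(2) Pc by (simp add: subsetD)
    finally show ?thesis .
  qed
  have cM: "carrier Mg = M" unfolding Mg_def by simp
  have orbE: "orbit Mg \<phi> x \<subseteq> E" if xE: "x \<in> E" for x
  proof
    fix y assume "y \<in> orbit Mg \<phi> x"
    then have "\<exists>h. y = \<phi> h x \<and> h \<in> carrier Mg" unfolding orbit_def by (rule CollectD)
    then obtain h where h: "h \<in> M" "y = \<phi> h x" unfolding cM by blast
    have "\<exists>g. x = M #> g \<and> g \<in> P" using xE unfolding E_def by (rule CollectD)
    then obtain g where g: "g \<in> P" "x = M #> g" by blast
    have "inv h \<in> P" using MP subgroup.m_inv_closed[OF M h(1)] by (rule subsetD)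
    then have gh: "g \<otimes> inv h \<in> P" using P g(1) by (intro subgroup.m_closed)
    have "y = \<phi> h (M #> g)" using h(2) g(2) by simp
    also have "\<dots> = M #> (g \<otimes> inv h)" by (rule phiE[OF h(1) g(1)])
    finally have "y = M #> (g \<otimes> inv h)" .
    then show "y \<in> E" unfolding E_def mem_Collect_eq using gh by blast
  qed
  obtain j where j: "card M = 2 ^ j" using pg_sub[OF M P MP pP] pg_def by auto
  have orbcard: "\<exists>i. card (orbit Mg \<phi> x) = 2 ^ i" if "x \<in> U" for x
  proof -
    have "card (orbit Mg \<phi> x) * card (stabilizer Mg \<phi> x) = order Mg"
      using group_action.orbit_stabilizer_theorem[OF act that] .
    also have "order Mg = 2 ^ j" unfolding Mg_def order_def using j by simp
    finally have "card (orbit Mg \<phi> x) dvd 2 ^ j"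
      using dvd_triv_left[of "card (orbit Mg \<phi> x)" "card (stabilizer Mg \<phi> x)"] by simp
    then show ?thesis by (rule dvd_pow2)
  qed
  define F where "F = {x \<in> E. \<forall>h\<in>M. \<phi> h x = x}"
  have fixorb: "x \<in> F" if xE: "x \<in> E" and c1: "card (orbit Mg \<phi> x) = 1" for x
  proof -
    have "x \<in> orbit Mg \<phi> x" using group_action.orbit_refl[OF act] xE EU by auto
    moreover obtain z where "orbit Mg \<phi> x = {z}" using c1 by (rule card_1_singletonE)
    ultimately have o: "orbit Mg \<phi> x = {x}" by simp
    have "\<phi> h x = x" if "h \<in> M" for h
    proof -
      have "\<phi> h x \<in> orbit Mg \<phi> x" unfolding orbit_def cM using that by auto
      then show ?thesis using o by auto
    qed
    then show ?thesis unfolding F_def using \<open>x \<in> E\<close> by auto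
  qed
  have finU: "finite E" 
  proof -
    have "E \<subseteq> Pow (carrier G)" using EU U_def by auto
    then show ?thesis using fin by (meson finite_Pow_iff finite_subset)
  qed
  have even1: "2 dvd card (E - F)"
  proof -
    define C where "C = {orbit Mg \<phi> x |x. x \<in> E - F}"
    have UC: "\<Union>C = E - F"
    proof (rule equalityI)
      show "\<Union>C \<subseteq> E - F"
      proof
        fix y assume "y \<in> \<Union>C"
        then obtain x where x: "x \<in> E - F" "y \<in> orbit Mg \<phi> x" unfolding C_def by auto
        have yE: "y \<in> E" using orbE x by auto
        have "y \<notin> F"
        proof
          assume yF: "y \<in> F"
          have "x \<in> orbit Mg \<phi> y"
            using group_action.orbit_sym[OF act] x yE EU by auto
          then obtain h where "h \<in> M" "x = \<phi> h y" unfolding orbit_def cM by auto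
          then have "x = y" using yF F_def by auto
          then show False using x yF by auto
        qed
        then show "y \<in> E - F" using yE by auto
      qed
      show "E - F \<subseteq> \<Union>C"
      proof
        fix x assume x: "x \<in> E - F"
        then have "x \<in> orbit Mg \<phi> x" using group_action.orbit_refl[OF act] EU by auto
        then show "x \<in> \<Union>C" unfolding C_def using x by auto
      qed
    qed
    have "2 dvd card (\<Union>C)"
    proof (rule dvd_partition)
      show "finite (\<Union>C)" unfolding UC using finU by auto
      show "\<forall>c\<in>C. 2 dvd card c"
      proof
        fix c assume "c \<in> C"
        then obtain x where x: "x \<in> E - F" "c = orbit Mg \<phi> x" unfolding C_def by auto
        obtain i where i: "card c = 2 ^ i" using orbcard x EU by auto
        have "i \<noteq> 0"
        proof
          assume "i = 0"
          then have "card (orbit Mg \<phi> x) = 1" using i x(2) by simp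
          then have "x \<in> F" using fixorb x(1) by blast
          then show False using x(1) by blast
        qed
        then show "2 dvd card c" using i by auto
      qed
      show "\<forall>c1\<in>C. \<forall>c2\<in>C. c1 \<noteq> c2 \<longrightarrow> c1 \<inter> c2 = {}"
      proof (intro ballI impI)
        fix c1 c2 assume "c1 \<in> C" "c2 \<in> C" "c1 \<noteq> c2"
        then obtain x1 x2 where "x1 \<in> U" "x2 \<in> U" "c1 = orbit Mg \<phi> x1" "c2 = orbit Mg \<phi> x2"
          unfolding C_def using EU by auto
        then have "c1 \<in> orbits Mg U \<phi>" "c2 \<in> orbits Mg U \<phi>" unfolding orbits_def by auto
        then show "c1 \<inter> c2 = {}" using group_action.disjoint_union[OF act] \<open>c1 \<noteq> c2\<close> by blast
      qed
    qed
    then show ?thesis using UC by simp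
  qed
  have even2: "2 dvd card E"
  proof -
    define GP where "GP = G\<lparr>carrier := P\<rparr>"
    have gGP: "group GP" unfolding GP_def using P by (rule subgroup_imp_group)
    have sM: "subgroup M GP" unfolding GP_def using subgroup_incl[OF M P MP] .
    have "card (rcosets\<^bsub>GP\<^esub> M) * card M = order GP" using group.lagrange[OF gGP sM] .
    moreover have "rcosets\<^bsub>GP\<^esub> M = E" unfolding E_def RCOSETS_def GP_def r_coset_def by auto
    moreover have "order GP = card P" unfolding GP_def order_def by simp
    ultimately have e: "card E * card M = card P" by simp
    obtain k where k: "card P = 2 ^ k" using pP pg_def by auto
    have "card M < card P" using MP ne fin_sub[OF Pc] by (simp add: psubset_card_mono)
    then have "j < k" using j k by auto
    have "(2::nat) ^ k = 2 ^ (k - j) * 2 ^ j" using \<open>j < k\<close> by (simp add: power_add[symmetric])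
    then have "card E * 2 ^ j = 2 ^ (k - j) * 2 ^ j" using e j k by simp
    then have "card E = 2 ^ (k - j)" by simp
    then show ?thesis using \<open>j < k\<close> by auto
  qed
  have FE: "F \<subseteq> E" unfolding F_def by auto
  have "card (E - F) = card E - card F" using card_Diff_subset[OF finite_subset[OF FE finU] FE] .
  moreover have "card F \<le> card E" using card_mono[OF finU FE] .
  ultimately have "card E = card F + card (E - F)" by simp
  then have evF: "2 dvd card F" using even1 even2 by presburger
  have MF: "M \<in> F"
  proof -
    have one: "\<one> \<in> P" using P subgroup.one_closed by blast
    have ME: "M = M #> \<one>" using Mc by simp
    have "\<phi> h M = M" if "h \<in> M" for h
    proof -
      have "\<phi> h (M #> \<one>) = M #> (\<one> \<otimes> inv h)" using phiE[OF that one] .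
      also have "\<one> \<otimes> inv h = inv h" using that Mc by auto
      also have "M #> inv h = M" using coset_join2[OF _ M] that Mc subgroup.m_inv_closed[OF M] by auto
      finally show ?thesis using ME by simp
    qed
    then show ?thesis unfolding F_def E_def using ME one by auto
  qed
  have "F \<noteq> {M}" using evF by auto
  then obtain x where x: "x \<in> F" "x \<noteq> M" using MF by blast
  have "x \<in> E" using x(1) unfolding F_def by blast
  then have "\<exists>g. x = M #> g \<and> g \<in> P" unfolding E_def by (rule CollectD)
  then obtain g where g: "g \<in> P" "x = M #> g" by blast
  have gc: "g \<in> carrier G" using g Pc by auto
  have gM: "g \<notin> M" 
  proof
    assume "g \<in> M" then have "M #> g = M" using coset_join2[OF gc M] by simp
    then show False using x g by simp
  qed
  have fx: "\<forall>h\<in>M. \<phi> h x = x" using x(1) unfolding F_def by blast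
  have nz: "g \<otimes> m \<otimes> inv g \<in> M" if m: "m \<in> M" for m
  proof -
    have mc: "m \<in> carrier G" using Mc m by (rule subsetD)
    have im: "inv m \<in> M" using M m by (rule subgroup.m_inv_closed)
    have "M #> (g \<otimes> m) = M #> (g \<otimes> inv (inv m))" using mc by simp
    also have "\<dots> = \<phi> (inv m) (M #> g)" using phiE[OF im g(1)] by simp
    also have "\<dots> = \<phi> (inv m) x" using g(2) by simp
    also have "\<dots> = x" using fx im by blast
    finally have e: "M #> (g \<otimes> m) = M #> g" using g(2) by simp
    have gmc: "g \<otimes> m \<in> carrier G" using gc mc by (rule m_closed)
    have "g \<otimes> m \<in> M #> (g \<otimes> m)" using gmc M by (rule rcos_self)
    then have "g \<otimes> m \<in> M #> g" using e by simp
    then have "g \<otimes> m \<in> (\<Union>h\<in>M. {h \<otimes> g})" unfolding r_coset_def .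
    then obtain m' where m': "m' \<in> M" "g \<otimes> m = m' \<otimes> g" by blast
    have m'c: "m' \<in> carrier G" using Mc m'(1) by (rule subsetD)
    have "g \<otimes> m \<otimes> inv g = m' \<otimes> g \<otimes> inv g" using m'(2) by simp
    also have "\<dots> = m'" using m'c gc by (simp add: m_assoc)
    finally show ?thesis using m'(1) by simp
  qed
  show ?thesis using g(1) gM nz by blast
qed

end

context fgroup begin

lemma nz_subgroup:
  assumes P: "subgroup P G" and M: "subgroup M G"
  shows "subgroup {g \<in> P. \<forall>m\<in>M. g \<otimes> m \<otimes> inv g \<in> M} G"
proof (rule subgroupI)
  have Pc: "P \<subseteq> carrier G" using P subgroup.subset by blast
  have Mc: "M \<subseteq> carrier G" using M subgroup.subset by blast
  show "{g \<in> P. \<forall>m\<in>M. g \<otimes> m \<otimes> inv g \<in> M} \<subseteq> carrier G" using Pc by auto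
  have "\<one> \<in> {g \<in> P. \<forall>m\<in>M. g \<otimes> m \<otimes> inv g \<in> M}"
    using subgroup.one_closed[OF P] Mc by auto
  then show "{g \<in> P. \<forall>m\<in>M. g \<otimes> m \<otimes> inv g \<in> M} \<noteq> {}" by blast
  show "inv a \<in> {g \<in> P. \<forall>m\<in>M. g \<otimes> m \<otimes> inv g \<in> M}" if a: "a \<in> {g \<in> P. \<forall>m\<in>M. g \<otimes> m \<otimes> inv g \<in> M}" for a
  proof -
    have aP: "a \<in> P" and cl: "\<And>m. m \<in> M \<Longrightarrow> a \<otimes> m \<otimes> inv a \<in> M" using a by auto
    have ac: "a \<in> carrier G" using Pc aP by (rule subsetD)
    have "inv a \<otimes> m \<otimes> inv (inv a) \<in> M" if "m \<in> M" for m
      using conj_inv_closed[OF M ac cl that] ac by simp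
    moreover have "inv a \<in> P" using P aP by (rule subgroup.m_inv_closed)
    ultimately show ?thesis by blast
  qed
  show "a \<otimes> b \<in> {g \<in> P. \<forall>m\<in>M. g \<otimes> m \<otimes> inv g \<in> M}"
    if a: "a \<in> {g \<in> P. \<forall>m\<in>M. g \<otimes> m \<otimes> inv g \<in> M}" and b: "b \<in> {g \<in> P. \<forall>m\<in>M. g \<otimes> m \<otimes> inv g \<in> M}" for a b
  proof -
    have aP: "a \<in> P" and cla: "\<And>m. m \<in> M \<Longrightarrow> a \<otimes> m \<otimes> inv a \<in> M" using a by auto
    have bP: "b \<in> P" and clb: "\<And>m. m \<in> M \<Longrightarrow> b \<otimes> m \<otimes> inv b \<in> M" using b by auto
    have ac: "a \<in> carrier G" using Pc aP by (rule subsetD)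
    have bc: "b \<in> carrier G" using Pc bP by (rule subsetD)
    have "a \<otimes> b \<otimes> m \<otimes> inv (a \<otimes> b) \<in> M" if m: "m \<in> M" for m
    proof -
      have mc: "m \<in> carrier G" using Mc m by (rule subsetD)
      have "a \<otimes> b \<otimes> m \<otimes> inv (a \<otimes> b) = a \<otimes> (b \<otimes> m \<otimes> inv b) \<otimes> inv a"
        using ac bc mc by (simp add: inv_mult_group m_assoc)
      then show ?thesis using cla[OF clb[OF m]] by simp
    qed
    moreover have "a \<otimes> b \<in> P" using P aP bP by (rule subgroup.m_closed)
    ultimately show ?thesis by blast
  qed
qed

lemma max_normal:
  assumes P: "subgroup P G" and pP: "pg P" and I: "subgroup I G" and IP: "I \<subseteq> P" and ne: "I \<noteq> P"
  shows "\<exists>M. subgroup M G \<and> I \<subseteq> M \<and> M \<subseteq> P \<and> M \<noteq> P \<and> (\<forall>g\<in>P. \<forall>m\<in>M. g \<otimes> m \<otimes> inv g \<in> M)"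
proof -
  define S where "S = {M. subgroup M G \<and> I \<subseteq> M \<and> M \<subseteq> P \<and> M \<noteq> P}"
  have Pc: "P \<subseteq> carrier G" using P subgroup.subset by blast
  have finS: "finite S"
  proof -
    have "S \<subseteq> Pow (carrier G)" unfolding S_def using Pc by auto
    then show ?thesis using fin by (meson finite_Pow_iff finite_subset)
  qed
  have IS: "I \<in> S" unfolding S_def using I IP ne by auto
  obtain M where M: "M \<in> S" "I \<subseteq> M" and mx: "\<forall>b\<in>S. M \<subseteq> b \<longrightarrow> M = b"
    using finite_has_maximal2[OF finS IS] by blast
  have sM: "subgroup M G" and MP: "M \<subseteq> P" and MnP: "M \<noteq> P" using M(1) unfolding S_def by auto
  define N where "N = {g \<in> P. \<forall>m\<in>M. g \<otimes> m \<otimes> inv g \<in> M}"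
  have sN: "subgroup N G" unfolding N_def using P sM by (rule nz_subgroup)
  have MN: "M \<subseteq> N"
  proof
    fix h assume h: "h \<in> M"
    have "h \<otimes> m \<otimes> inv h \<in> M" if "m \<in> M" for m
      using sM h that subgroup.m_closed subgroup.m_inv_closed by metis
    then show "h \<in> N" unfolding N_def using h MP by auto
  qed
  obtain g where g: "g \<in> P" "g \<notin> M" "\<forall>m\<in>M. g \<otimes> m \<otimes> inv g \<in> M"
    using normalizer_growth[OF P pP sM MP MnP] by blast
  have gN: "g \<in> N" unfolding N_def using g by blast
  have NP: "N \<subseteq> P" unfolding N_def by blast
  have "N = P"
  proof (rule ccontr)
    assume "N \<noteq> P"
    then have "N \<in> S" unfolding S_def using sN M(2) MN NP by auto
    then have "M = N" using mx MN by blast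
    then show False using g(2) gN by blast
  qed
  then have "\<forall>g\<in>P. \<forall>m\<in>M. g \<otimes> m \<otimes> inv g \<in> M" unfolding N_def by blast
  then show ?thesis using sM M(2) MP MnP by blast
qed

lemma gen_conj:
  assumes S: "S \<subseteq> carrier G" and T: "T \<subseteq> carrier G" and g: "g \<in> carrier G"
    and cl: "\<And>s. s \<in> S \<Longrightarrow> g \<otimes> s \<otimes> inv g \<in> generate G T"
    and x: "x \<in> generate G S"
  shows "g \<otimes> x \<otimes> inv g \<in> generate G T"
  using x
proof (induction x rule: generate.induct)
  case one
  have "g \<otimes> \<one> \<otimes> inv g = \<one>" using g by simp
  then show ?case using generate.one by metis
next
  case (incl h)
  then show ?case by (rule cl)
next
  case (inv h)
  have hc: "h \<in> carrier G" using S inv by (rule subsetD)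
  have "g \<otimes> inv h \<otimes> inv g = inv (g \<otimes> h \<otimes> inv g)"
    using g hc by (simp add: inv_mult_group m_assoc)
  moreover have "inv (g \<otimes> h \<otimes> inv g) \<in> generate G T"
    using gen_sub[OF T] cl[OF inv] by (rule subgroup.m_inv_closed)
  ultimately show ?case by simp
next
  case (eng h1 h2)
  have h1c: "h1 \<in> carrier G" using generate_in_carrier[OF S eng(1)] .
  have h2c: "h2 \<in> carrier G" using generate_in_carrier[OF S eng(2)] .
  have "g \<otimes> (h1 \<otimes> h2) \<otimes> inv g = (g \<otimes> h1 \<otimes> inv g) \<otimes> (g \<otimes> h2 \<otimes> inv g)"
    using g h1c h2c by (simp add: m_assoc canc2)
  moreover have "(g \<otimes> h1 \<otimes> inv g) \<otimes> (g \<otimes> h2 \<otimes> inv g) \<in> generate G T"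
    using gen_sub[OF T] eng(3) eng(4) by (rule subgroup.m_closed)
  ultimately show ?case by simp
qed

end

context fgroup begin

lemma lemL:
  assumes "subgroup P G" "pg P" "subgroup K G" "K \<subseteq> P" "\<forall>g\<in>P. \<forall>k\<in>K. g \<otimes> k \<otimes> inv g \<in> K"
    "Y \<subseteq> P" "\<forall>g\<in>P. \<forall>x\<in>Y. g \<otimes> x \<otimes> inv g \<in> Y" "P = generate G (Y \<union> K)"
    "subgroup I G" "K \<subseteq> I" "I \<subseteq> P" "I \<noteq> P" "I = generate G ((Y \<inter> I) \<union> K)"
  shows "\<exists>x\<in>Y. x \<notin> I \<and> (\<forall>i\<in>I. x \<otimes> i \<otimes> inv x \<in> I)"
  using assms
proof (induction "card P" arbitrary: P Y I rule: less_induct)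
  case less
  note P = less.prems(1) and pP = less.prems(2) and K = less.prems(3) and KP = less.prems(4)
    and nK = less.prems(5) and YP = less.prems(6) and nY = less.prems(7) and PY = less.prems(8)
    and I = less.prems(9) and KI = less.prems(10) and IP = less.prems(11) and IneP = less.prems(12)
    and IX = less.prems(13)
  have Pc: "P \<subseteq> carrier G" using P subgroup.subset by blast
  have Yc: "Y \<subseteq> carrier G" using YP Pc by blast
  have Kc: "K \<subseteq> carrier G" using KP Pc by blast
  obtain M where M: "subgroup M G" "I \<subseteq> M" "M \<subseteq> P" "M \<noteq> P"
    and nM': "\<forall>g\<in>P. \<forall>m\<in>M. g \<otimes> m \<otimes> inv g \<in> M"
    using max_normal[OF P pP I IP IneP] by blast
  define M' where "M' = generate G ((Y \<inter> M) \<union> K)"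
  have XMc: "(Y \<inter> M) \<union> K \<subseteq> carrier G" using Yc Kc by blast
  have sM': "subgroup M' G" unfolding M'_def using XMc by (rule gen_sub)
  have M'M: "M' \<subseteq> M" unfolding M'_def using KI M(2) M(1) by (intro gen_min) auto
  have IM': "I \<subseteq> M'"
  proof -
    have "generate G ((Y \<inter> I) \<union> K) \<subseteq> generate G ((Y \<inter> M) \<union> K)"
      using M(2) XMc by (intro gen_mono) auto
    then show ?thesis using IX M'_def by simp
  qed
  show ?case
  proof (cases "M' = I")
    case False
    have M'P: "M' \<subseteq> P" using M'M M(3) by blast
    have cardlt: "card M' < card P"
    proof -
      have "M' \<subset> P" using M'M M(3) M(4) by blast
      then show ?thesis by (rule psubset_card_mono[OF fin_sub[OF Pc]])
    qed
    have pM': "pg M'" using pg_sub[OF sM' P M'P pP] .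
    have KM': "K \<subseteq> M'" using KI IM' by blast
    have nKM': "\<forall>g\<in>M'. \<forall>k\<in>K. g \<otimes> k \<otimes> inv g \<in> K" using nK M'P by blast
    have XM'M': "Y \<inter> M' \<subseteq> M'" by blast
    have nXM': "\<forall>g\<in>M'. \<forall>x\<in>Y \<inter> M'. g \<otimes> x \<otimes> inv g \<in> Y \<inter> M'"
    proof (intro ballI)
      fix g x assume g: "g \<in> M'" and x: "x \<in> Y \<inter> M'"
      have "g \<otimes> x \<otimes> inv g \<in> Y" using nY M'P g x by blast
      moreover have "g \<otimes> x \<otimes> inv g \<in> M'"
        using subgroup.m_closed[OF sM' subgroup.m_closed[OF sM' g] subgroup.m_inv_closed[OF sM' g]] x by blast
      ultimately show "g \<otimes> x \<otimes> inv g \<in> Y \<inter> M'" by blast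
    qed
    have M'gen: "M' = generate G ((Y \<inter> M') \<union> K)"
    proof (rule equalityI)
      have "(Y \<inter> M) \<union> K \<subseteq> M'" unfolding M'_def by (rule gen_incl)
      then have "Y \<inter> M \<subseteq> Y \<inter> M'" by blast
      then have "generate G ((Y \<inter> M) \<union> K) \<subseteq> generate G ((Y \<inter> M') \<union> K)"
        using Yc Kc by (intro gen_mono) auto
      then show "M' \<subseteq> generate G ((Y \<inter> M') \<union> K)" using M'_def by simp
      show "generate G ((Y \<inter> M') \<union> K) \<subseteq> M'" using KM' sM' by (intro gen_min) auto
    qed
    have IneM': "I \<noteq> M'" using False by simp
    have XI: "(Y \<inter> M') \<inter> I = Y \<inter> I" using IM' by blast
    have IX': "I = generate G (((Y \<inter> M') \<inter> I) \<union> K)" using IX XI by simp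
    obtain x where x: "x \<in> Y \<inter> M'" "x \<notin> I" "\<forall>i\<in>I. x \<otimes> i \<otimes> inv x \<in> I"
      using less.hyps[OF cardlt sM' pM' K KM' nKM' XM'M' nXM' M'gen I KI IM' IneM' IX'] by blast
    then show ?thesis by blast
  next
    case True
    have "(Y \<inter> M) \<union> K \<subseteq> M'" unfolding M'_def by (rule gen_incl)
    then have XMI: "Y \<inter> M \<subseteq> I" using True by blast
    have Igen: "I = generate G ((Y \<inter> M) \<union> K)" using True M'_def by simp
    have nI: "\<forall>i\<in>I. g \<otimes> i \<otimes> inv g \<in> I" if g: "g \<in> P" for g
    proof
      fix i assume i: "i \<in> I"
      have gc: "g \<in> carrier G" using Pc g by (rule subsetD)
      have "g \<otimes> s \<otimes> inv g \<in> generate G ((Y \<inter> M) \<union> K)" if s: "s \<in> (Y \<inter> M) \<union> K" for s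
      proof -
        have "g \<otimes> s \<otimes> inv g \<in> (Y \<inter> M) \<union> K"
        proof (cases "s \<in> K")
          case True
          then show ?thesis using nK g by blast
        next
          case False
          then have "s \<in> Y" "s \<in> M" using s by auto
          then have "g \<otimes> s \<otimes> inv g \<in> Y" "g \<otimes> s \<otimes> inv g \<in> M" using nY nM' g by blast+
          then show ?thesis by blast
        qed
        then show ?thesis using gen_incl[of "(Y \<inter> M) \<union> K"] by (rule subsetD[rotated])
      qed
      moreover have "i \<in> generate G ((Y \<inter> M) \<union> K)" using i Igen by simp
      ultimately have "g \<otimes> i \<otimes> inv g \<in> generate G ((Y \<inter> M) \<union> K)"
        by (rule gen_conj[OF XMc XMc gc])
      then show "g \<otimes> i \<otimes> inv g \<in> I" using Igen by simp
    qed
    have "\<not> Y \<subseteq> I"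
    proof
      assume "Y \<subseteq> I"
      then have "generate G (Y \<union> K) \<subseteq> I" using KI I by (intro gen_min) auto
      then have "P \<subseteq> I" using PY by simp
      then show False using IP IneP by blast
    qed
    then obtain x where x: "x \<in> Y" "x \<notin> I" by blast
    have "x \<in> P" using YP x(1) by (rule subsetD)
    then have "\<forall>i\<in>I. x \<otimes> i \<otimes> inv x \<in> I" by (rule nI)
    then show ?thesis using x by blast
  qed
qed

end

context fgroup begin

lemma card_lt_sub:
  assumes "A \<subseteq> B" "A \<noteq> B" "B \<subseteq> carrier G"
  shows "card A < card B"
proof -
  have "A \<subset> B" using assms by blast
  then show ?thesis by (rule psubset_card_mono[OF fin_sub[OF assms(3)]])
qed

lemma card_le_sub:
  assumes "A \<subseteq> B" "B \<subseteq> carrier G"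
  shows "card A \<le> card B"
  by (rule card_mono[OF fin_sub[OF assms(2)] assms(1)])

lemma BS:
  assumes "subgroup H G" "subgroup K G" "K \<subseteq> H" "\<forall>h\<in>H. \<forall>k\<in>K. h \<otimes> k \<otimes> inv h \<in> K" "pg K"
    "D \<subseteq> H" "\<forall>h\<in>H. \<forall>d\<in>D. h \<otimes> d \<otimes> inv h \<in> D"
    "\<forall>a\<in>D. \<forall>b\<in>D. pg (generate G ({a, b} \<union> K))"
  shows "pg (generate G (D \<union> K))"
  using assms
proof (induction "card H - card K" arbitrary: H K D rule: less_induct)
  case less
  note H = less.prems(1) and K = less.prems(2) and KH = less.prems(3) and nK = less.prems(4)
    and pK = less.prems(5) and DH = less.prems(6) and nD = less.prems(7) and pairs = less.prems(8)
  have Hc: "H \<subseteq> carrier G" using H subgroup.subset by blast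
  have Kc: "K \<subseteq> carrier G" using KH Hc by blast
  have Dc: "D \<subseteq> carrier G" using DH Hc by blast
  have DKc: "D \<union> K \<subseteq> carrier G" using Dc Kc by blast
  define L where "L = generate G (D \<union> K)"
  have sL: "subgroup L G" unfolding L_def using DKc by (rule gen_sub)
  have LH: "L \<subseteq> H" unfolding L_def using DH KH H by (intro gen_min) auto
  have DKL: "D \<union> K \<subseteq> L" unfolding L_def by (rule gen_incl)
  show ?case
  proof (cases "L = H")
    case False
    have "card L < card H" using card_lt_sub[OF LH False Hc] .
    moreover have "card K \<le> card L" using card_le_sub[of K L] DKL sL subgroup.subset[OF sL] by blast
    ultimately have lt: "card L - card K < card H - card K" by linarith
    have KL: "K \<subseteq> L" using DKL by blast
    have nKL: "\<forall>h\<in>L. \<forall>k\<in>K. h \<otimes> k \<otimes> inv h \<in> K" using nK LH by blast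
    have DL: "D \<subseteq> L" using DKL by blast
    have nDL: "\<forall>h\<in>L. \<forall>d\<in>D. h \<otimes> d \<otimes> inv h \<in> D" using nD LH by blast
    show ?thesis using less.hyps[OF lt sL K KL nKL pK DL nDL pairs] .
  next
    case True
    show ?thesis
    proof (cases "D \<subseteq> K")
      case True
      then have "D \<union> K = K" by blast
      then show ?thesis using gen_self[OF K] pK by simp
    next
      case False
      then obtain a where aD: "a \<in> D" and aK: "a \<notin> K" by blast
      define Pset where "Pset = {Q. \<exists>E. E \<subseteq> D \<and> Q = generate G (E \<union> K) \<and> pg Q}"
      define mx where "mx Q \<longleftrightarrow> Q \<in> Pset \<and> (\<forall>Q'\<in>Pset. Q \<subseteq> Q' \<longrightarrow> Q' = Q)" for Q
      have finP: "finite Pset"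
      proof -
        have "Pset \<subseteq> Pow (carrier G)"
        proof
          fix Q assume "Q \<in> Pset"
          then obtain E where E: "E \<subseteq> D" "Q = generate G (E \<union> K)" unfolding Pset_def by blast
          have "E \<union> K \<subseteq> carrier G" using E(1) Dc Kc by blast
          then have "Q \<subseteq> carrier G" unfolding E(2) by (rule generate_incl)
          then show "Q \<in> Pow (carrier G)" by blast
        qed
        then show ?thesis using fin by (meson finite_Pow_iff finite_subset)
      qed
      have PsetD: "subgroup Q G \<and> pg Q \<and> K \<subseteq> Q \<and> Q \<subseteq> H \<and> Q = generate G ((D \<inter> Q) \<union> K)"
        if Q: "Q \<in> Pset" for Q
      proof -
        obtain E where E: "E \<subseteq> D" "Q = generate G (E \<union> K)" "pg Q" using Q unfolding Pset_def by blast
        have EKc: "E \<union> K \<subseteq> carrier G" using E(1) Dc Kc by blast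
        have sQ: "subgroup Q G" unfolding E(2) using EKc by (rule gen_sub)
        have EKQ: "E \<union> K \<subseteq> Q" unfolding E(2) by (rule gen_incl)
        have QH: "Q \<subseteq> H" unfolding E(2) using E(1) DH KH H by (intro gen_min) auto
        have "Q \<subseteq> generate G ((D \<inter> Q) \<union> K)"
        proof -
          have "generate G (E \<union> K) \<subseteq> generate G ((D \<inter> Q) \<union> K)"
            using E(1) EKQ Dc Kc by (intro gen_mono) auto
          then show ?thesis using E(2) by simp
        qed
        moreover have "generate G ((D \<inter> Q) \<union> K) \<subseteq> Q" using EKQ sQ by (intro gen_min) auto
        ultimately show ?thesis using sQ E(3) EKQ QH by blast
      qed
      have PsetI: "generate G (E \<union> K) \<in> Pset" if "E \<subseteq> D" "pg (generate G (E \<union> K))" for E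
        unfolding Pset_def using that by blast
      have exmx: "\<exists>Q'. mx Q' \<and> Q \<subseteq> Q'" if QP: "Q \<in> Pset" for Q
      proof -
        obtain Q' where "Q' \<in> Pset" "Q \<subseteq> Q'" "\<forall>b\<in>Pset. Q' \<subseteq> b \<longrightarrow> Q' = b"
          using finite_has_maximal2[OF finP QP] by blast
        then show ?thesis unfolding mx_def by metis
      qed
      have pairP: "generate G ({x, y} \<union> K) \<in> Pset" if "x \<in> D" "y \<in> D" for x y
        using PsetI[of "{x, y}"] that pairs by blast
      obtain P0 where P0: "mx P0" "generate G ({a, a} \<union> K) \<subseteq> P0" using exmx[OF pairP[OF aD aD]] by blast
      have aP0: "a \<in> P0" using P0(2) gen_incl[of "{a, a} \<union> K"] by blast
      show ?thesis
      proof (cases "D \<subseteq> P0")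
        case True
        have P0D: "subgroup P0 G \<and> pg P0 \<and> K \<subseteq> P0 \<and> P0 \<subseteq> H \<and> P0 = generate G ((D \<inter> P0) \<union> K)"
          using PsetD P0(1) mx_def by blast
        then have "generate G (D \<union> K) \<subseteq> P0" using True by (intro gen_min) auto
        then show ?thesis using pg_sub[OF gen_sub[OF DKc]] P0D by blast
      next
        case False
        then obtain d where dD: "d \<in> D" and dP0: "d \<notin> P0" by blast
        obtain P1 where P1: "mx P1" "generate G ({a, d} \<union> K) \<subseteq> P1" using exmx[OF pairP[OF aD dD]] by blast
        have adP1: "a \<in> P1" "d \<in> P1" using P1(2) gen_incl[of "{a, d} \<union> K"] by blast+
        define Pairs where "Pairs = {(Q, Q'). mx Q \<and> mx Q' \<and> Q \<noteq> Q' \<and> (D - K) \<inter> Q \<inter> Q' \<noteq> {}}"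
        have P01: "(P0, P1) \<in> Pairs" unfolding Pairs_def using P0(1) P1(1) aP0 adP1 dP0 aD aK by blast
        have finPairs: "finite Pairs"
        proof -
          have "Pairs \<subseteq> Pset \<times> Pset" unfolding Pairs_def mx_def by auto
          then show ?thesis using finP by (meson finite_SigmaI finite_subset)
        qed
        define f where "f p = card (D \<inter> fst p \<inter> snd p)" for p
        define m where "m = Max (f ` Pairs)"
        have "m \<in> f ` Pairs" unfolding m_def using finPairs P01 by (intro Max_in) auto
        then obtain p where pP: "p \<in> Pairs" and fp: "f p = m" by blast
        have fmax: "f q \<le> f p" if "q \<in> Pairs" for q
          unfolding fp m_def using finPairs that by (intro Max_ge) auto
        obtain P P' where pe: "p = (P, P')" by (cases p)
        have mP: "mx P" and mP': "mx P'" and PP': "P \<noteq> P'" and ne: "(D - K) \<inter> P \<inter> P' \<noteq> {}"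
          using pP unfolding pe Pairs_def by auto
        have mxP: "Q \<in> Pset" if "mx Q" for Q using that unfolding mx_def by blast
        have PD: "subgroup P G" "pg P" "K \<subseteq> P" "P \<subseteq> H" "P = generate G ((D \<inter> P) \<union> K)"
          using PsetD[OF mxP[OF mP]] by blast+
        have P'D: "subgroup P' G" "pg P'" "K \<subseteq> P'" "P' \<subseteq> H" "P' = generate G ((D \<inter> P') \<union> K)"
          using PsetD[OF mxP[OF mP']] by blast+
        define E where "E = D \<inter> P \<inter> P'"
        define I where "I = generate G (E \<union> K)"
        have EKc: "E \<union> K \<subseteq> carrier G" unfolding E_def using Dc Kc by blast
        have sI: "subgroup I G" unfolding I_def using EKc by (rule gen_sub)
        have EKI: "E \<union> K \<subseteq> I" unfolding I_def by (rule gen_incl)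
        have IP: "I \<subseteq> P" unfolding I_def using PD(1,3) by (intro gen_min) (auto simp: E_def)
        have IP': "I \<subseteq> P'" unfolding I_def using P'D(1,3) by (intro gen_min) (auto simp: E_def)
        have pI: "pg I" using pg_sub[OF sI PD(1) IP PD(2)] .
        have IH: "I \<subseteq> H" using IP PD(4) by blast
        have IneP: "I \<noteq> P"
        proof
          assume "I = P"
          then have "P \<subseteq> P'" using IP' by simp
          then show False using mP mxP[OF mP'] PP' unfolding mx_def by blast
        qed
        have IneP': "I \<noteq> P'"
        proof
          assume "I = P'"
          then have "P' \<subseteq> P" using IP by simp
          then show False using mP' mxP[OF mP] PP' unfolding mx_def by blast
        qed
        obtain e where eD: "e \<in> D" and eK: "e \<notin> K" and eP: "e \<in> P" and eP': "e \<in> P'" using ne by blast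
        have eE: "e \<in> E" unfolding E_def using eD eP eP' by blast
        have KI: "K \<subseteq> I" using EKI by blast
        have KneI: "K \<noteq> I" using eE EKI eK by blast
        have EI: "E \<subseteq> I" using EKI by blast
        have Ic: "I \<subseteq> carrier G" using IH Hc by blast
        show ?thesis
        proof (cases "\<forall>h\<in>H. \<forall>i\<in>I. h \<otimes> i \<otimes> inv h \<in> I")
          case True
          have "card K < card I" using card_lt_sub[OF KI KneI Ic] .
          moreover have "card I \<le> card H" using card_le_sub[OF IH Hc] .
          ultimately have lt: "card H - card I < card H - card K" by linarith
          have pairsI: "\<forall>a\<in>D. \<forall>b\<in>D. pg (generate G ({a, b} \<union> I))"
          proof (intro ballI)
            fix x y assume x: "x \<in> D" and y: "y \<in> D"
            define A where "A = generate G ({x, y} \<union> K)"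
            have xyKc: "{x, y} \<union> K \<subseteq> carrier G" using x y Dc Kc by blast
            have sA: "subgroup A G" unfolding A_def using xyKc by (rule gen_sub)
            have pA: "pg A" unfolding A_def using pairs x y by blast
            have AH: "A \<subseteq> H" unfolding A_def using x y DH KH H by (intro gen_min) auto
            have nzA: "\<And>u i. u \<in> A \<Longrightarrow> i \<in> I \<Longrightarrow> u \<otimes> i \<otimes> inv u \<in> I" using True AH by blast
            have pAI: "pg (generate G (A \<union> I))" using product_pg[OF sA sI nzA pA pI] .
            have xyA: "{x, y} \<subseteq> A" unfolding A_def using gen_incl[of "{x, y} \<union> K"] by blast
            have AIc: "A \<union> I \<subseteq> carrier G" using subgroup.subset[OF sA] Ic by blast
            have "generate G ({x, y} \<union> I) \<subseteq> generate G (A \<union> I)"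
              using xyA AIc by (intro gen_mono) auto
            moreover have "{x, y} \<union> I \<subseteq> carrier G" using x y Dc Ic by blast
            ultimately show "pg (generate G ({x, y} \<union> I))"
              using pg_sub[OF gen_sub gen_sub[OF AIc] _ pAI] by blast
          qed
          have pDI: "pg (generate G (D \<union> I))"
            using less.hyps[OF lt H sI IH True pI DH nD pairsI] .
          have DIc: "D \<union> I \<subseteq> carrier G" using Dc Ic by blast
          have "generate G (D \<union> K) \<subseteq> generate G (D \<union> I)" using KI DIc by (intro gen_mono) auto
          then show ?thesis using pg_sub[OF gen_sub[OF DKc] gen_sub[OF DIc] _ pDI] by blast
        next
          case False
          define N where "N = {g \<in> H. \<forall>i\<in>I. g \<otimes> i \<otimes> inv g \<in> I}"
          have sN: "subgroup N G" unfolding N_def using H sI by (rule nz_subgroup)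
          have NH: "N \<subseteq> H" unfolding N_def by blast
          have NneH: "N \<noteq> H" using False unfolding N_def by blast
          have KN: "K \<subseteq> N"
          proof
            fix k assume k: "k \<in> K"
            have kH: "k \<in> H" using KH k by (rule subsetD)
            have kc: "k \<in> carrier G" using Kc k by (rule subsetD)
            have cl: "k \<otimes> u \<otimes> inv k \<in> I" if u: "u \<in> E \<union> K" for u
            proof (cases "u \<in> K")
              case True
              have "k \<otimes> u \<otimes> inv k \<in> K"
                using subgroup.m_closed[OF K subgroup.m_closed[OF K k True] subgroup.m_inv_closed[OF K k]] .
              then show ?thesis using KI by blast
            next
              case False
              then have uE: "u \<in> E" using u by blast
              have uH: "u \<in> H" using uE DH unfolding E_def by blast
              have uc: "u \<in> carrier G" using Hc uH by (rule subsetD)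
              have iuH: "inv u \<in> H" using H uH by (rule subgroup.m_inv_closed)
              have k': "inv u \<otimes> k \<otimes> inv (inv u) \<in> K" using nK iuH k by blast
              have e: "k \<otimes> u \<otimes> inv k = u \<otimes> (inv u \<otimes> k \<otimes> inv (inv u)) \<otimes> inv k"
                using uc kc by (simp add: m_assoc canc1)
              have "u \<otimes> (inv u \<otimes> k \<otimes> inv (inv u)) \<otimes> inv k \<in> I"
              proof -
                have "u \<in> I" using uE EI by blast
                moreover have "inv u \<otimes> k \<otimes> inv (inv u) \<in> I" using k' KI by blast
                moreover have "inv k \<in> I" using KI subgroup.m_inv_closed[OF K k] by blast
                ultimately show ?thesis using sI by (meson subgroup.m_closed)
              qed
              then show ?thesis using e by simp
            qed
            have "\<forall>i\<in>I. k \<otimes> i \<otimes> inv k \<in> I"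
            proof
              fix i assume "i \<in> I"
              then have "i \<in> generate G (E \<union> K)" unfolding I_def .
              with gen_conj[OF EKc EKc kc] cl have "k \<otimes> i \<otimes> inv k \<in> generate G (E \<union> K)"
                unfolding I_def by blast
              then show "k \<otimes> i \<otimes> inv k \<in> I" unfolding I_def .
            qed
            then show "k \<in> N" unfolding N_def using kH by blast
          qed
          have IN: "I \<subseteq> N"
          proof
            fix i assume i: "i \<in> I"
            have "\<forall>j\<in>I. i \<otimes> j \<otimes> inv i \<in> I"
              using i sI by (meson subgroup.m_closed subgroup.m_inv_closed)
            then show "i \<in> N" unfolding N_def using i IH by blast
          qed
          have "card N < card H" using card_lt_sub[OF NH NneH Hc] .
          moreover have "card K \<le> card N" using card_le_sub[OF KN] NH Hc by blast
          ultimately have lt: "card N - card K < card H - card K" by linarith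
          have nKN: "\<forall>h\<in>N. \<forall>k\<in>K. h \<otimes> k \<otimes> inv h \<in> K" using nK NH by blast
          have DNN: "D \<inter> N \<subseteq> N" by blast
          have nDN: "\<forall>h\<in>N. \<forall>d\<in>D \<inter> N. h \<otimes> d \<otimes> inv h \<in> D \<inter> N"
          proof (intro ballI)
            fix h d assume h: "h \<in> N" and d: "d \<in> D \<inter> N"
            have "h \<otimes> d \<otimes> inv h \<in> D" using nD NH h d by blast
            moreover have "h \<otimes> d \<otimes> inv h \<in> N"
              using subgroup.m_closed[OF sN subgroup.m_closed[OF sN h] subgroup.m_inv_closed[OF sN h]] d by blast
            ultimately show "h \<otimes> d \<otimes> inv h \<in> D \<inter> N" by blast
          qed
          have pairsN: "\<forall>a\<in>D \<inter> N. \<forall>b\<in>D \<inter> N. pg (generate G ({a, b} \<union> K))" using pairs by blast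
          define Q where "Q = generate G ((D \<inter> N) \<union> K)"
          have pQ: "pg Q" unfolding Q_def using less.hyps[OF lt sN K KN nKN pK DNN nDN pairsN] .
          have QP: "Q \<in> Pset" unfolding Q_def using PsetI[of "D \<inter> N"] pQ Q_def by blast
          obtain P'' where mP'': "mx P''" and QP'': "Q \<subseteq> P''" using exmx[OF QP] by blast
          have DNQ: "D \<inter> N \<subseteq> Q" unfolding Q_def using gen_incl[of "(D \<inter> N) \<union> K"] by blast
          have nDP: "\<forall>g\<in>P. \<forall>x\<in>D \<inter> P. g \<otimes> x \<otimes> inv g \<in> D \<inter> P"
          proof (intro ballI)
            fix g x assume g: "g \<in> P" and x: "x \<in> D \<inter> P"
            have "g \<otimes> x \<otimes> inv g \<in> D" using nD PD(4) g x by blast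
            moreover have "g \<otimes> x \<otimes> inv g \<in> P"
              using subgroup.m_closed[OF PD(1) subgroup.m_closed[OF PD(1) g] subgroup.m_inv_closed[OF PD(1) g]] x by blast
            ultimately show "g \<otimes> x \<otimes> inv g \<in> D \<inter> P" by blast
          qed
          have nDP': "\<forall>g\<in>P'. \<forall>x\<in>D \<inter> P'. g \<otimes> x \<otimes> inv g \<in> D \<inter> P'"
          proof (intro ballI)
            fix g x assume g: "g \<in> P'" and x: "x \<in> D \<inter> P'"
            have "g \<otimes> x \<otimes> inv g \<in> D" using nD P'D(4) g x by blast
            moreover have "g \<otimes> x \<otimes> inv g \<in> P'"
              using subgroup.m_closed[OF P'D(1) subgroup.m_closed[OF P'D(1) g] subgroup.m_inv_closed[OF P'D(1) g]] x by blast
            ultimately show "g \<otimes> x \<otimes> inv g \<in> D \<inter> P'" by blast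
          qed
          have nKP: "\<forall>g\<in>P. \<forall>k\<in>K. g \<otimes> k \<otimes> inv g \<in> K" using nK PD(4) by blast
          have nKP': "\<forall>g\<in>P'. \<forall>k\<in>K. g \<otimes> k \<otimes> inv g \<in> K" using nK P'D(4) by blast
          have E1: "(D \<inter> P) \<inter> I = E" using EI IP' unfolding E_def by blast
          have E2: "(D \<inter> P') \<inter> I = E" using EI IP unfolding E_def by blast
          have IE1: "I = generate G (((D \<inter> P) \<inter> I) \<union> K)" using E1 I_def by simp
          have IE2: "I = generate G (((D \<inter> P') \<inter> I) \<union> K)" using E2 I_def by simp
          obtain x where x: "x \<in> D \<inter> P" "x \<notin> I" "\<forall>i\<in>I. x \<otimes> i \<otimes> inv x \<in> I"
            using lemL[OF PD(1) PD(2) K PD(3) nKP _ nDP PD(5) sI KI IP IneP IE1] by blast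
          obtain y where y: "y \<in> D \<inter> P'" "y \<notin> I" "\<forall>i\<in>I. y \<otimes> i \<otimes> inv y \<in> I"
            using lemL[OF P'D(1) P'D(2) K P'D(3) nKP' _ nDP' P'D(5) sI KI IP' IneP' IE2] by blast
          have xN: "x \<in> N" unfolding N_def using x PD(4) by blast
          have yN: "y \<in> N" unfolding N_def using y P'D(4) by blast
          have xP'': "x \<in> P''" using xN x(1) DNQ QP'' by blast
          have yP'': "y \<in> P''" using yN y(1) DNQ QP'' by blast
          have EP'': "E \<subseteq> P''" using EI IN DNQ QP'' unfolding E_def by blast
          show ?thesis
          proof (cases "P'' = P")
            case True
            then have "y \<in> E" unfolding E_def using y(1) yP'' by blast
            then show ?thesis using y(2) EI by blast
          next
            case False
            have "(P, P'') \<in> Pairs" unfolding Pairs_def using mP mP'' False eE EP'' eK eD eP by blast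
            then have le: "f (P, P'') \<le> f p" by (rule fmax)
            have finD: "finite D" using Dc by (rule fin_sub)
            have "insert x E \<subseteq> D \<inter> P \<inter> P''" using x(1) xP'' EP'' unfolding E_def by blast
            then have "card (insert x E) \<le> card (D \<inter> P \<inter> P'')" using finD by (intro card_mono) auto
            moreover have "card (insert x E) = Suc (card E)"
              using x(2) EI finD unfolding E_def by (subst card_insert_disjoint) auto
            ultimately have "Suc (card E) \<le> f (P, P'')" unfolding f_def by simp
            moreover have "f p = card E" unfolding f_def pe E_def by simp
            ultimately show ?thesis using le by simp
          qed
        qed
      qed
    qed
  qed
qed

end

lemma pg_group:
  assumes "is_perm_group \<Omega> H"
  shows "group (perm_grp \<Omega> H)"
  using assms unfolding is_perm_group_def perm_grp_def
  by (rule group.subgroup_imp_group[OF group_BijGroup])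

lemma pg_carrier: "carrier (perm_grp \<Omega> H) = H"
  unfolding perm_grp_def by simp

lemma pg_Bij:
  assumes "is_perm_group \<Omega> H" "f \<in> H"
  shows "f \<in> Bij \<Omega>"
proof -
  have "H \<subseteq> carrier (BijGroup \<Omega>)" using assms(1) unfolding is_perm_group_def by (rule subgroup.subset)
  then show ?thesis using assms(2) unfolding BijGroup_def by auto
qed

lemma pg_maps:
  assumes "is_perm_group \<Omega> H" "f \<in> H" "x \<in> \<Omega>"
  shows "f x \<in> \<Omega>"
  using pg_Bij[OF assms(1,2)] assms(3) unfolding Bij_def bij_betw_def by auto

lemma pg_inj:
  assumes "is_perm_group \<Omega> H" "f \<in> H"
  shows "inj_on f \<Omega>"
  using pg_Bij[OF assms(1,2)] unfolding Bij_def bij_betw_def by auto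

lemma pg_mult:
  assumes "is_perm_group \<Omega> H" "f \<in> H" "g \<in> H" "x \<in> \<Omega>"
  shows "(f \<otimes>\<^bsub>perm_grp \<Omega> H\<^esub> g) x = f (g x)"
  using pg_Bij[OF assms(1,2)] pg_Bij[OF assms(1,3)] assms(4)
  unfolding perm_grp_def BijGroup_def by (simp add: compose_def)

lemma pg_one:
  assumes "x \<in> \<Omega>"
  shows "\<one>\<^bsub>perm_grp \<Omega> H\<^esub> x = x"
  using assms unfolding perm_grp_def BijGroup_def by simp

lemma pg_finite:
  assumes "is_perm_group \<Omega> H" "finite \<Omega>"
  shows "finite H"
proof -
  have "H \<subseteq> \<Omega> \<rightarrow>\<^sub>E \<Omega>"
  proof
    fix f assume "f \<in> H"
    then have "f \<in> Bij \<Omega>" using pg_Bij[OF assms(1)] by blast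
    then show "f \<in> \<Omega> \<rightarrow>\<^sub>E \<Omega>" unfolding Bij_def bij_betw_def PiE_def extensional_def by auto
  qed
  moreover have "finite (\<Omega> \<rightarrow>\<^sub>E \<Omega>)" using assms(2) by (intro finite_PiE) auto
  ultimately show ?thesis by (rule finite_subset)
qed

lemma pg_fgroup:
  assumes "is_perm_group \<Omega> H" "finite \<Omega>"
  shows "fgroup (perm_grp \<Omega> H)"
proof -
  interpret group "perm_grp \<Omega> H" using pg_group[OF assms(1)] .
  show ?thesis by unfold_locales (simp add: pg_carrier pg_finite[OF assms])
qed


context fgroup begin

lemma pow_sub_card:
  assumes S: "subgroup S G" and u: "u \<in> S"
  shows "u [^] card S = \<one>"
proof -
  have g: "group (G\<lparr>carrier := S\<rparr>)" using S by (rule subgroup_imp_group)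
  have "u [^]\<^bsub>G\<lparr>carrier := S\<rparr>\<^esub> order (G\<lparr>carrier := S\<rparr>) = \<one>\<^bsub>G\<lparr>carrier := S\<rparr>\<^esub>"
    using group.pow_order_eq_1[OF g] u by simp
  then show ?thesis unfolding order_def by (simp add: nat_pow_consistent[symmetric])
qed

lemma pow2_ord:
  assumes c: "c \<in> carrier G" and e: "c [^] ((2::nat) ^ m) = \<one>"
  shows "pg (generate G {c})"
proof -
  have "ord c dvd 2 ^ m" using pow_eq_id[OF c] e by simp
  then have "\<exists>j. ord c = 2 ^ j" by (rule dvd_pow2)
  then show ?thesis unfolding pg_def using generate_pow_card[OF c] by simp
qed

lemma dihedral_pg:
  assumes a: "a \<in> carrier G" and b: "b \<in> carrier G" and aa: "a \<otimes> a = \<one>" and bb: "b \<otimes> b = \<one>"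
    and e: "(a \<otimes> b) [^] ((2::nat) ^ m) = \<one>"
  shows "pg (generate G ({a, b} \<union> {\<one>}))"
proof -
  define c where "c = a \<otimes> b"
  have cc: "c \<in> carrier G" unfolding c_def using a b by simp
  define A where "A = {\<one>, a}"
  define B where "B = generate G {c}"
  have ia: "inv a = a" using aa a by (simp add: inv_equality)
  have ib: "inv b = b" using bb b by (simp add: inv_equality)
  have sA: "subgroup A G"
  proof (rule subgroupI)
    show "A \<subseteq> carrier G" unfolding A_def using a by simp
    show "A \<noteq> {}" unfolding A_def by simp
    show "inv x \<in> A" if "x \<in> A" for x using that ia unfolding A_def by auto
    show "x \<otimes> y \<in> A" if "x \<in> A" "y \<in> A" for x y using that aa a unfolding A_def by auto
  qed
  have pA: "pg A"
  proof (cases "a = \<one>")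
    case True then show ?thesis unfolding A_def pg_def by (intro exI[of _ 0]) simp
  next
    case False then show ?thesis unfolding A_def pg_def by (intro exI[of _ 1]) simp
  qed
  have cc1: "{c} \<subseteq> carrier G" using cc by simp
  have sB: "subgroup B G" unfolding B_def using cc1 by (rule gen_sub)
  have pB: "pg B" unfolding B_def using pow2_ord[OF cc] e c_def by blast
  have conjB: "x \<otimes> v \<otimes> inv x \<in> B" if x: "x \<in> A" and v: "v \<in> B" for x v
  proof (cases "x = \<one>")
    case True
    have vc: "v \<in> carrier G" using v subgroup.subset[OF sB] by blast
    then show ?thesis using True v by simp
  next
    case False
    then have xa: "x = a" using x unfolding A_def by simp
    have "a \<otimes> s \<otimes> inv a \<in> B" if "s \<in> {c}" for s
    proof -
      have "a \<otimes> c \<otimes> inv a = inv c"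
        unfolding c_def ia using a b aa by (simp add: inv_mult_group m_assoc[symmetric] ia ib)
      moreover have "inv c \<in> B" using subgroup.m_inv_closed[OF sB] gen_incl[of "{c}"] B_def by blast
      ultimately show ?thesis using that by simp
    qed
    then show ?thesis unfolding xa using gen_conj[OF cc1 cc1 a] v B_def by blast
  qed
  have pAB: "pg (generate G (A \<union> B))" using product_pg[OF sA sB conjB pA pB] .
  have ABc: "A \<union> B \<subseteq> carrier G" using subgroup.subset[OF sA] subgroup.subset[OF sB] by blast
  have sub: "{a, b} \<union> {\<one>} \<subseteq> generate G (A \<union> B)"
  proof -
    have aG: "a \<in> generate G (A \<union> B)" unfolding A_def by (rule generate.incl) simp
    have cG: "c \<in> generate G (A \<union> B)" using gen_incl[of "{c}"] B_def by (intro generate.incl) blast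
    have "b = a \<otimes> c" unfolding c_def using a b aa by (simp add: m_assoc[symmetric])
    then have "b \<in> generate G (A \<union> B)" using generate.eng[OF aG cG] by simp
    then show ?thesis using aG generate.one by blast
  qed
  have c2: "{a, b} \<union> {\<one>} \<subseteq> carrier G" using a b by simp
  have "generate G ({a, b} \<union> {\<one>}) \<subseteq> generate G (A \<union> B)"
    using sub gen_sub[OF ABc] by (rule gen_min)
  then show ?thesis using pg_sub[OF gen_sub[OF c2] gen_sub[OF ABc] _ pAB] by blast
qed

lemma conj_pow:
  assumes a: "a \<in> carrier G" and b: "b \<in> carrier G" and aa: "a \<otimes> a = \<one>" and bb: "b \<otimes> b = \<one>"
  shows "a \<otimes> (a \<otimes> b) [^] (j::nat) \<otimes> a = inv ((a \<otimes> b) [^] j)"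
proof (induction j)
  case 0
  then show ?case using a aa by simp
next
  case (Suc j)
  define c where "c = a \<otimes> b"
  have cc: "c \<in> carrier G" unfolding c_def using a b by simp
  have ib: "inv b = b" using bb b by (simp add: inv_equality)
  have ia: "inv a = a" using aa a by (simp add: inv_equality)
  have aca: "a \<otimes> c \<otimes> a = inv c"
    unfolding c_def using a b aa by (simp add: inv_mult_group m_assoc[symmetric] ia ib)
  have "(a \<otimes> c [^] j \<otimes> a) \<otimes> (a \<otimes> c \<otimes> a) = a \<otimes> c [^] j \<otimes> (a \<otimes> a) \<otimes> c \<otimes> a"
    using a cc by (simp add: m_assoc)
  also have "\<dots> = a \<otimes> c [^] Suc j \<otimes> a" using aa a cc by (simp add: m_assoc)
  finally have "a \<otimes> c [^] Suc j \<otimes> a = (a \<otimes> c [^] j \<otimes> a) \<otimes> (a \<otimes> c \<otimes> a)" by simp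
  also have "\<dots> = inv (c [^] j) \<otimes> inv c" using Suc aca unfolding c_def by simp
  also have "\<dots> = inv (c \<otimes> c [^] j)" using cc by (simp add: inv_mult_group)
  also have "c \<otimes> c [^] j = c [^] Suc j" using nat_pow_Suc2[OF cc, symmetric] .
  finally show ?case unfolding c_def .
qed

lemma conj_pow2:
  assumes a: "a \<in> carrier G" and b: "b \<in> carrier G" and aa: "a \<otimes> a = \<one>" and bb: "b \<otimes> b = \<one>"
  shows "inv ((a \<otimes> b) [^] (j::nat)) \<otimes> a \<otimes> (a \<otimes> b) [^] j = a \<otimes> (a \<otimes> b) [^] (2 * j)"
proof -
  define c where "c = a \<otimes> b"
  have cc: "c \<in> carrier G" unfolding c_def using a b by simp
  have "inv (c [^] j) \<otimes> a \<otimes> c [^] j = (a \<otimes> c [^] j \<otimes> a) \<otimes> a \<otimes> c [^] j"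
    using conj_pow[OF a b aa bb, of j] unfolding c_def by simp
  also have "\<dots> = a \<otimes> (c [^] j \<otimes> c [^] j)" using a cc aa by (simp add: m_assoc)
  also have "c [^] j \<otimes> c [^] j = c [^] (2 * j)" using cc by (simp add: nat_pow_mult mult_2)
  finally show ?thesis unfolding c_def .
qed

end

locale pact = fgroup G for G :: "('a, 'b) monoid_scheme" (structure) +
  fixes Om :: "'x set" and ev :: "'a \<Rightarrow> 'x \<Rightarrow> 'x"
  assumes finOm: "finite Om"
    and maps: "\<And>f x. f \<in> carrier G \<Longrightarrow> x \<in> Om \<Longrightarrow> ev f x \<in> Om"
    and injev: "\<And>f. f \<in> carrier G \<Longrightarrow> inj_on (ev f) Om"
    and evm: "\<And>f g x. f \<in> carrier G \<Longrightarrow> g \<in> carrier G \<Longrightarrow> x \<in> Om \<Longrightarrow> ev (f \<otimes> g) x = ev f (ev g x)"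
    and ev1: "\<And>x. x \<in> Om \<Longrightarrow> ev \<one> x = x"
    and stab2: "\<And>x. x \<in> Om \<Longrightarrow> \<exists>k. \<forall>f\<in>carrier G. ev f x = x \<longrightarrow> f [^] ((2::nat) ^ k) = \<one>"
    and O2triv: "\<And>N. N \<lhd> G \<Longrightarrow> pg N \<Longrightarrow> N \<subseteq> {\<one>}"
begin

definition fx :: "'a \<Rightarrow> 'x set" where "fx u = {x \<in> Om. ev u x = x}"

lemma fx_sub: "fx u \<subseteq> Om" unfolding fx_def by auto

lemma pow_fix:
  assumes u: "u \<in> carrier G" and x: "x \<in> Om" and e: "ev u x = x"
  shows "ev (u [^] (n::nat)) x = x"
proof (induction n)
  case 0 then show ?case using ev1[OF x] by simp
next
  case (Suc n)
  have "ev (u [^] Suc n) x = ev (u [^] n) (ev u x)" using evm[OF nat_pow_closed[OF u] u x] by simp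
  then show ?case using Suc e by simp
qed

lemma fx_pow: "u \<in> carrier G \<Longrightarrow> fx u \<subseteq> fx (u [^] (n::nat))"
  unfolding fx_def using pow_fix by auto

lemma fx_conj_le:
  assumes h: "h \<in> carrier G" and u: "u \<in> carrier G"
  shows "card (fx u) \<le> card (fx (h \<otimes> u \<otimes> inv h))"
proof (rule card_inj_on_le)
  show "inj_on (ev h) (fx u)" using injev[OF h] fx_sub by (rule inj_on_subset)
  show "ev h ` fx u \<subseteq> fx (h \<otimes> u \<otimes> inv h)"
  proof
    fix y assume "y \<in> ev h ` fx u"
    then obtain z where z: "z \<in> fx u" "y = ev h z" by blast
    have zO: "z \<in> Om" and uz: "ev u z = z" using z(1) unfolding fx_def by auto
    have yO: "y \<in> Om" using maps[OF h zO] z(2) by simp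
    have ihy: "ev (inv h) y = z"
    proof -
      have "ev (inv h) y = ev (inv h \<otimes> h) z" using evm[OF inv_closed[OF h] h zO] z(2) by simp
      also have "\<dots> = z" using h ev1[OF zO] by simp
      finally show ?thesis .
    qed
    have "ev (h \<otimes> u \<otimes> inv h) y = ev h (ev u (ev (inv h) y))"
      using evm[OF m_closed[OF h u] inv_closed[OF h] yO] evm[OF h u maps[OF inv_closed[OF h] yO]] by simp
    also have "\<dots> = y" using ihy uz z(2) by simp
    finally show "y \<in> fx (h \<otimes> u \<otimes> inv h)" unfolding fx_def using yO by simp
  qed
  show "finite (fx (h \<otimes> u \<otimes> inv h))" using finOm fx_sub by (rule finite_subset[rotated])
qed

lemma fx_conj:
  assumes h: "h \<in> carrier G" and u: "u \<in> carrier G"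
  shows "card (fx (h \<otimes> u \<otimes> inv h)) = card (fx u)"
proof (rule antisym)
  show "card (fx u) \<le> card (fx (h \<otimes> u \<otimes> inv h))" using fx_conj_le[OF h u] .
  have "inv h \<otimes> (h \<otimes> u \<otimes> inv h) \<otimes> inv (inv h) = u" using h u by (simp add: m_assoc canc2)
  then show "card (fx (h \<otimes> u \<otimes> inv h)) \<le> card (fx u)"
    using fx_conj_le[OF inv_closed[OF h] m_closed[OF m_closed[OF h u] inv_closed[OF h]]] by simp
qed

lemma nofix:
  assumes c: "c \<in> carrier G" and nc: "\<forall>m. c [^] ((2::nat) ^ m) \<noteq> \<one>"
    and d: "d = 2 \<or> d = 4" and v: "v \<in> Om"
  shows "ev (c [^] (d::nat)) v \<noteq> v"
proof
  assume e: "ev (c [^] d) v = v"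
  obtain k where k: "\<forall>f\<in>carrier G. ev f v = v \<longrightarrow> f [^] ((2::nat) ^ k) = \<one>" using stab2[OF v] by blast
  have "(c [^] d) [^] ((2::nat) ^ k) = \<one>" using k e nat_pow_closed[OF c] by blast
  then have e2: "c [^] (d * 2 ^ k) = \<one>" using c by (simp add: nat_pow_pow)
  from d show False
  proof
    assume "d = 2"
    then have "d * 2 ^ k = 2 ^ Suc k" by simp
    then show False using e2 nc by metis
  next
    assume "d = 4"
    then have "d * 2 ^ k = 2 ^ Suc (Suc k)" by simp
    then show False using e2 nc by metis
  qed
qed

lemma disj_fix:
  assumes a: "a \<in> carrier G" and c: "c \<in> carrier G" and nc: "\<forall>m. c [^] ((2::nat) ^ m) \<noteq> \<one>"
    and d: "n' = n + 2 \<or> n' = n + 4"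
  shows "fx (a \<otimes> c [^] (n::nat)) \<inter> fx (a \<otimes> c [^] n') = {}"
proof (rule ccontr)
  assume "fx (a \<otimes> c [^] n) \<inter> fx (a \<otimes> c [^] n') \<noteq> {}"
  then obtain x where x1: "x \<in> fx (a \<otimes> c [^] n)" and x2: "x \<in> fx (a \<otimes> c [^] n')" by blast
  have xO: "x \<in> Om" using x1 unfolding fx_def by auto
  have cn: "c [^] n \<in> carrier G" "c [^] n' \<in> carrier G" using c by auto
  have e1: "ev a (ev (c [^] n) x) = x" using x1 evm[OF a cn(1) xO] unfolding fx_def by simp
  have e2: "ev a (ev (c [^] n') x) = x" using x2 evm[OF a cn(2) xO] unfolding fx_def by simp
  have eq: "ev (c [^] n) x = ev (c [^] n') x"
    using inj_onD[OF injev[OF a] _ maps[OF cn(1) xO] maps[OF cn(2) xO]] e1 e2 by simp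
  obtain d' where d': "d' = 2 \<or> d' = 4" "n' = d' + n" using d by auto
  have "c [^] n' = c [^] d' \<otimes> c [^] n" using d'(2) c by (simp add: nat_pow_mult)
  then have "ev (c [^] n') x = ev (c [^] d') (ev (c [^] n) x)" using evm[OF nat_pow_closed[OF c] cn(1) xO] by simp
  then have "ev (c [^] d') (ev (c [^] n) x) = ev (c [^] n) x" using eq by simp
  then show False using nofix[OF c nc d'(1) maps[OF cn(1) xO]] by simp
qed

lemma three_disj:
  assumes "A \<subseteq> Om" "B \<subseteq> Om" "C \<subseteq> Om" "A \<inter> B = {}" "A \<inter> C = {}" "B \<inter> C = {}"
  shows "card A + card B + card C \<le> card Om"
proof -
  have f: "finite A" "finite B" "finite C" using assms(1-3) finOm finite_subset by blast+
  have "card (A \<union> B \<union> C) = card A + card B + card C"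
    using f assms(4-6) by (simp add: card_Un_disjoint Int_Un_distrib2)
  moreover have "card (A \<union> B \<union> C) \<le> card Om" using assms(1-3) finOm by (intro card_mono) auto
  ultimately show ?thesis by simp
qed

lemma exists_bad_pair:
  assumes t: "t \<in> carrier G" and t1: "t \<noteq> \<one>"
  shows "\<exists>a\<in>{h \<otimes> t \<otimes> inv h |h. h \<in> carrier G}. \<exists>b\<in>{h \<otimes> t \<otimes> inv h |h. h \<in> carrier G}.
           \<not> pg (generate G ({a, b} \<union> {\<one>}))"
proof (rule ccontr)
  define D where "D = {h \<otimes> t \<otimes> inv h |h. h \<in> carrier G}"
  assume "\<not> ?thesis"
  then have pairs: "\<forall>a\<in>D. \<forall>b\<in>D. pg (generate G ({a, b} \<union> {\<one>}))" unfolding D_def by blast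
  have Dc: "D \<subseteq> carrier G" unfolding D_def using t by auto
  have one1: "{\<one>} \<subseteq> carrier G" by simp
  have s1: "subgroup {\<one>} G" using gen_sub[OF one1] generate_one by simp
  have p1: "pg {\<one>}" unfolding pg_def by (intro exI[of _ 0]) simp
  have n1: "\<forall>h\<in>carrier G. \<forall>k\<in>{\<one>}. h \<otimes> k \<otimes> inv h \<in> {\<one>}" by simp
  have nD: "\<forall>h\<in>carrier G. \<forall>d\<in>D. h \<otimes> d \<otimes> inv h \<in> D"
  proof (intro ballI)
    fix h d assume h: "h \<in> carrier G" and "d \<in> D"
    then obtain h' where h': "h' \<in> carrier G" "d = h' \<otimes> t \<otimes> inv h'" unfolding D_def by blast
    have "h \<otimes> d \<otimes> inv h = (h \<otimes> h') \<otimes> t \<otimes> inv (h \<otimes> h')"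
      using h h'(1) t unfolding h'(2) by (simp add: m_assoc inv_mult_group)
    moreover have "h \<otimes> h' \<in> carrier G" using h h'(1) by simp
    ultimately show "h \<otimes> d \<otimes> inv h \<in> D" unfolding D_def by blast
  qed
  have pT: "pg (generate G (D \<union> {\<one>}))"
    using BS[OF subgroup_self s1 _ n1 p1 Dc nD pairs] by simp
  have Tc: "D \<union> {\<one>} \<subseteq> carrier G" using Dc by simp
  have nT: "generate G (D \<union> {\<one>}) \<lhd> G"
    unfolding normal_inv_iff
  proof (intro conjI ballI)
    show "subgroup (generate G (D \<union> {\<one>})) G" using Tc by (rule gen_sub)
    fix x h assume x: "x \<in> carrier G" and h: "h \<in> generate G (D \<union> {\<one>})"
    have "x \<otimes> s \<otimes> inv x \<in> generate G (D \<union> {\<one>})" if "s \<in> D \<union> {\<one>}" for s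
    proof -
      have "x \<otimes> s \<otimes> inv x \<in> D \<union> {\<one>}" using that nD x by auto
      then show ?thesis using gen_incl[of "D \<union> {\<one>}"] by blast
    qed
    then show "x \<otimes> h \<otimes> inv x \<in> generate G (D \<union> {\<one>})" using gen_conj[OF Tc Tc x _ h] by blast
  qed
  have "generate G (D \<union> {\<one>}) \<subseteq> {\<one>}" using O2triv[OF nT pT] .
  moreover have "t \<in> generate G (D \<union> {\<one>})"
  proof -
    have "t = \<one> \<otimes> t \<otimes> inv \<one>" using t by simp
    then have "t \<in> D" unfolding D_def by blast
    then show ?thesis using gen_incl[of "D \<union> {\<one>}"] by blast
  qed
  ultimately show False using t1 by blast
qed

lemma main:
  assumes g: "g \<in> carrier G" and g1: "g \<noteq> \<one>"
  shows "2 * card Om \<le> 3 * card {x \<in> Om. ev g x \<noteq> x}"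
proof (cases "fx g = {}")
  case True
  then have "{x \<in> Om. ev g x \<noteq> x} = Om" unfolding fx_def by auto
  then show ?thesis by simp
next
  case False
  then obtain w where w: "w \<in> fx g" by blast
  have wO: "w \<in> Om" and gw: "ev g w = w" using w unfolding fx_def by auto
  obtain k where "\<forall>f\<in>carrier G. ev f w = w \<longrightarrow> f [^] ((2::nat) ^ k) = \<one>" using stab2[OF wO] by blast
  then have gk: "g [^] ((2::nat) ^ k) = \<one>" using g gw by blast
  have "ord g dvd 2 ^ k" using pow_eq_id[OF g] gk by simp
  then obtain i where i: "ord g = 2 ^ i" using dvd_pow2 by blast
  have i0: "i \<noteq> 0"
  proof
    assume "i = 0" then have "ord g = 1" using i by simp
    then show False using ord_eq_1[OF g] g1 by simp
  qed
  define t where "t = g [^] ((2::nat) ^ (i - 1))"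
  have tc: "t \<in> carrier G" unfolding t_def using g by simp
  have t1: "t \<noteq> \<one>"
  proof
    assume "t = \<one>"
    then have "ord g dvd 2 ^ (i - 1)" using pow_eq_id[OF g] t_def by simp
    then have "(2::nat) ^ i dvd 2 ^ (i - 1)" using i by simp
    then have "(2::nat) ^ i \<le> 2 ^ (i - 1)" by (intro dvd_imp_le) auto
    then show False using i0 by (simp add: power_le_imp_le_exp)
  qed
  have tt: "t \<otimes> t = \<one>"
  proof -
    have "t \<otimes> t = g [^] ((2::nat) ^ (i - 1) + 2 ^ (i - 1))" unfolding t_def using g by (simp add: nat_pow_mult)
    also have "(2::nat) ^ (i - 1) + 2 ^ (i - 1) = 2 ^ i" using i0 by (cases i) auto
    also have "g [^] ((2::nat) ^ i) = \<one>" using i pow_ord_eq_1[OF g] by simp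
    finally show ?thesis .
  qed
  have fgt: "fx g \<subseteq> fx t" unfolding t_def using fx_pow[OF g] .
  obtain a b where aD: "a \<in> {h \<otimes> t \<otimes> inv h |h. h \<in> carrier G}" and bD: "b \<in> {h \<otimes> t \<otimes> inv h |h. h \<in> carrier G}"
    and npg: "\<not> pg (generate G ({a, b} \<union> {\<one>}))" using exists_bad_pair[OF tc t1] by blast
  obtain h1 where h1: "h1 \<in> carrier G" "a = h1 \<otimes> t \<otimes> inv h1" using aD by blast
  obtain h2 where h2: "h2 \<in> carrier G" "b = h2 \<otimes> t \<otimes> inv h2" using bD by blast
  have ac: "a \<in> carrier G" using h1 tc by simp
  have bc: "b \<in> carrier G" using h2 tc by simp
  have invol: "h \<otimes> t \<otimes> inv h \<otimes> (h \<otimes> t \<otimes> inv h) = \<one>" if h: "h \<in> carrier G" for h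
  proof -
    have "h \<otimes> t \<otimes> inv h \<otimes> (h \<otimes> t \<otimes> inv h) = h \<otimes> (t \<otimes> t) \<otimes> inv h"
      using h tc by (simp add: m_assoc canc2)
    then show ?thesis using tt h by simp
  qed
  have aa: "a \<otimes> a = \<one>" using invol[OF h1(1)] h1(2) by simp
  have bb: "b \<otimes> b = \<one>" using invol[OF h2(1)] h2(2) by simp
  define c where "c = a \<otimes> b"
  have cc: "c \<in> carrier G" unfolding c_def using ac bc by simp
  have nc: "\<forall>m. c [^] ((2::nat) ^ m) \<noteq> \<one>"
  proof
    fix m show "c [^] ((2::nat) ^ m) \<noteq> \<one>"
    proof
      assume "c [^] ((2::nat) ^ m) = \<one>"
      then have "pg (generate G ({a, b} \<union> {\<one>}))" using dihedral_pg[OF ac bc aa bb] c_def by blast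
      then show False using npg by simp
    qed
  qed
  have fa: "card (fx a) = card (fx t)" using fx_conj[OF h1(1) tc] h1(2) by simp
  have fj: "card (fx (a \<otimes> c [^] (2 * j))) = card (fx t)" for j :: nat
  proof -
    have "inv (c [^] j) \<otimes> a \<otimes> c [^] j = a \<otimes> c [^] (2 * j)"
      using conj_pow2[OF ac bc aa bb] c_def by simp
    moreover have "inv (c [^] j) \<otimes> a \<otimes> inv (inv (c [^] j)) = inv (c [^] j) \<otimes> a \<otimes> c [^] j"
      using cc by simp
    ultimately have "card (fx (a \<otimes> c [^] (2 * j))) = card (fx a)"
      using fx_conj[OF inv_closed[OF nat_pow_closed[OF cc]] ac, of j] by simp
    then show ?thesis using fa by simp
  qed
  have d01: "fx a \<inter> fx (a \<otimes> c [^] (2::nat)) = {}"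
    using disj_fix[OF ac cc nc, where n=0 and n'=2] ac by simp
  have d02: "fx a \<inter> fx (a \<otimes> c [^] (4::nat)) = {}"
    using disj_fix[OF ac cc nc, where n=0 and n'=4] ac by simp
  have d12: "fx (a \<otimes> c [^] (2::nat)) \<inter> fx (a \<otimes> c [^] (4::nat)) = {}"
    using disj_fix[OF ac cc nc, where n=2 and n'=4] by simp
  have "card (fx a) + card (fx (a \<otimes> c [^] (2::nat))) + card (fx (a \<otimes> c [^] (4::nat))) \<le> card Om"
    using three_disj[OF fx_sub fx_sub fx_sub d01 d02 d12] .
  moreover have "card (fx (a \<otimes> c [^] (2::nat))) = card (fx t)" using fj[of 1] by simp
  moreover have "card (fx (a \<otimes> c [^] (4::nat))) = card (fx t)" using fj[of 2] by simp
  ultimately have le3: "3 * card (fx t) \<le> card Om" using fa by simp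
  have "card (fx g) \<le> card (fx t)" using fgt finOm fx_sub by (meson card_mono finite_subset)
  moreover have "{x \<in> Om. ev g x \<noteq> x} = Om - fx g" unfolding fx_def by auto
  moreover have "card (Om - fx g) = card Om - card (fx g)" using fx_sub finOm by (meson card_Diff_subset finite_subset)
  moreover have "card (fx g) \<le> card Om" using fx_sub finOm by (rule card_mono[rotated])
  ultimately show ?thesis using le3 by simp
qed

end

theorem theorem1p1:
  fixes \<Omega> :: "'a set" and H :: "('a \<Rightarrow> 'a) set"
  assumes "finite \<Omega>"
    and "is_perm_group \<Omega> H"
    and "transitive_on \<Omega> H"
    and "O2 (perm_grp \<Omega> H) = {\<one>\<^bsub>perm_grp \<Omega> H\<^esub>}"
    and "\<forall>\<omega>\<in>\<Omega>. p_subgroup (perm_grp \<Omega> H) 2 (stabiliser H \<omega>)"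
  shows "\<forall>g\<in>H. g \<noteq> \<one>\<^bsub>perm_grp \<Omega> H\<^esub> \<longrightarrow> 3 * card (supp \<Omega> g) \<ge> 2 * card \<Omega>"
proof -
  note finO = assms(1) and pgH = assms(2) and O2c = assms(4) and st = assms(5)
  interpret fgroup "perm_grp \<Omega> H" using pg_fgroup[OF pgH finO] .
  have cG: "carrier (perm_grp \<Omega> H) = H" by (rule pg_carrier)
  interpret pact "perm_grp \<Omega> H" \<Omega> "\<lambda>f. f"
  proof (unfold_locales)
    show "finite \<Omega>" by (rule finO)
    show "\<And>f x. f \<in> carrier (perm_grp \<Omega> H) \<Longrightarrow> x \<in> \<Omega> \<Longrightarrow> f x \<in> \<Omega>"
      using pg_maps[OF pgH] cG by blast
    show "\<And>f. f \<in> carrier (perm_grp \<Omega> H) \<Longrightarrow> inj_on f \<Omega>"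
      using pg_inj[OF pgH] cG by blast
    show "\<And>f g x. f \<in> carrier (perm_grp \<Omega> H) \<Longrightarrow> g \<in> carrier (perm_grp \<Omega> H) \<Longrightarrow> x \<in> \<Omega> \<Longrightarrow>
        (f \<otimes>\<^bsub>perm_grp \<Omega> H\<^esub> g) x = f (g x)"
      using pg_mult[OF pgH] cG by blast
    show "\<And>x. x \<in> \<Omega> \<Longrightarrow> \<one>\<^bsub>perm_grp \<Omega> H\<^esub> x = x" by (rule pg_one)
    show "\<exists>k. \<forall>f\<in>carrier (perm_grp \<Omega> H). f x = x \<longrightarrow> f [^]\<^bsub>perm_grp \<Omega> H\<^esub> ((2::nat) ^ k) = \<one>\<^bsub>perm_grp \<Omega> H\<^esub>"
      if x: "x \<in> \<Omega>" for x
    proof -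
      have ps: "p_subgroup (perm_grp \<Omega> H) 2 (stabiliser H x)" using st x by blast
      then have sS: "subgroup (stabiliser H x) (perm_grp \<Omega> H)" and cS: "\<exists>k. card (stabiliser H x) = 2 ^ k"
        unfolding p_subgroup_def by auto
      then obtain k where k: "card (stabiliser H x) = 2 ^ k" by blast
      have "f [^]\<^bsub>perm_grp \<Omega> H\<^esub> ((2::nat) ^ k) = \<one>\<^bsub>perm_grp \<Omega> H\<^esub>"
        if f: "f \<in> carrier (perm_grp \<Omega> H)" and fx: "f x = x" for f
      proof -
        have "f \<in> stabiliser H x" unfolding stabiliser_def using f fx cG by simp
        then show ?thesis using pow_sub_card[OF sS] k by simp
      qed
      then show ?thesis by blast
    qed
    show "N \<subseteq> {\<one>\<^bsub>perm_grp \<Omega> H\<^esub>}" if N: "N \<lhd> perm_grp \<Omega> H" and pN: "pg N" for N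
    proof -
      have sN: "subgroup N (perm_grp \<Omega> H)" using N by (rule normal_imp_subgroup)
      have "N \<subseteq> H" using subgroup.subset[OF sN] cG by simp
      then have fN: "finite N" using pg_finite[OF pgH finO] finite_subset by blast
      have "p_subgroup (perm_grp \<Omega> H) 2 N" unfolding p_subgroup_def using sN fN pN pg_def by blast
      then have "N \<subseteq> \<Union>{N. N \<lhd> perm_grp \<Omega> H \<and> p_subgroup (perm_grp \<Omega> H) 2 N}" using N by blast
      also have "\<dots> \<subseteq> O2 (perm_grp \<Omega> H)" unfolding O2_def by (rule gen_incl)
      finally show ?thesis using O2c by simp
    qed
  qed
  show ?thesis
  proof (intro ballI impI)
    fix g assume g: "g \<in> H" and g1: "g \<noteq> \<one>\<^bsub>perm_grp \<Omega> H\<^esub>"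
    have "2 * card \<Omega> \<le> 3 * card {x \<in> \<Omega>. g x \<noteq> x}" using main g g1 cG by simp
    then show "3 * card (supp \<Omega> g) \<ge> 2 * card \<Omega>" unfolding supp_def by simp
  qed
qed


end
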